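(* Let $f:\mathbb{R}^n\to\mathbb{R}$, $g:\mathbb{R}^m\to\mathbb{R}$, $Q:\mathbb{R}^n\times\mathbb{R}^m\to\mathbb{R}\cup\{+\infty\}$ and $L(x,y)=f(x)+Q(x,y)+g(y)$ satisfy: (A1) $L$ is bounded below; $f,g$ are continuously differentiable with $\nabla f$, $\nabla g$ Lipschitz continuous with constants $L_{\nabla f}$, $L_{\nabla g}$; $Q$ is proper and lower semicontinuous; $\phi_1:\mathbb{R}^n\to\mathbb{R}$, $\phi_2:\mathbb{R}^m\to\mathbb{R}$ are differentiable, $\phi_i$ is $\theta_i$-strongly convex with $\theta_1>L_{\nabla f}$, $\theta_2>L_{\nabla g}$, and $\nabla\phi_i$ is $\eta_i$-Lipschitz continuous ($i=1,2$); (A2) $L$ is coercive and $\mathrm{dom}\,Q$ is closed; for all $(x,y)\in\mathrm{dom}\,Q$, $\partial_xQ(x,y)\times\partial_yQ(x,y)\subset\partial Q(x,y)$; and $Q(x,y)=q(x,y)+h(x)$, where $h:\mathbb{R}^n\to\mathbb{R}\cup\{+\infty\}$ is continuous on its domain, $q$ is continuous on $\mathrm{dom}\,Q$, for every $y$ the partial function $q(\cdot,y)$ is continuously differentiable, and for each bounded subset $D_1\times D_2\subset\mathrm{dom}\,Q$ there exists $\xi>0$ such that $\|\nabla_xq(\bar x,y)-\nabla_xq(\bar x,\bar y)\|\le\xi\|y-\bar y\|$ for all $\bar x\in D_1$, $y,\bar y\in D_2$. Assume moreover that $L$ is a Kurdyka–Łojasiewicz (KŁ) function. Let $z_k=(x_k,y_k)$,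 together with $(\hat x_k,\hat y_k)$, be generated by the following algorithm with initial point $z_0=(x_0,y_0)$: set $(\hat x_0,\hat y_0)=(x_0,y_0)$, choose $\alpha_{\max},\beta_{\max}\ge0$ with $\alpha_{\max}+\beta_{\max}<1$ and $\alpha_k\in[0,\alpha_{\max}]$, $\beta_k\in[0,\beta_{\max}]$; for $k=0,1,\dots$: 1. $x_{k+1}\in\arg\min_{x}\{Q(x,\hat y_k)+\langle\nabla f(\hat x_k),x\rangle+D_{\phi_1}(x,\hat x_k)\}$, $y_{k+1}\in\arg\min_{y}\{Q(x_{k+1},y)+\langle\nabla g(\hat y_k),y\rangle+D_{\phi_2}(y,\hat y_k)\}$; 2. $u_{k+1}=x_{k+1}+\alpha_k(x_{k+1}-x_k)+\beta_k(x_k-x_{k-1})$, $v_{k+1}=y_{k+1}+\alpha_k(y_{k+1}-y_k)+\beta_k(y_k-y_{k-1})$; 3. if $L(u_{k+1},v_{k+1})\le L(x_{k+1},y_{k+1})$ then $(\hat x_{k+1},\hat y_{k+1})=(u_{k+1},v_{k+1})$, else $(\hat x_{k+1},\hat y_{k+1})=(x_{k+1},y_{k+1})$. Then (i) $\sum_{k=0}^\infty\|z_{k+1}-z_k\|<\infty$, and (ii) the sequence $\{z_k\}$ converges to a critical point of $L$.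
   Context: For a convex differentiable $\phi$, $D_\phi(x,y)=\phi(x)-\phi(y)-\langle\nabla\phi(y),x-y\rangle$ (Bregman distance). $\phi$ is $\theta$-strongly convex if $\phi-\frac\theta2\|\cdot\|^2$ is convex. For a proper lsc $F$, the Fréchet subdifferential $\hat\partial F(x)$ is the set of $v$ with $\liminf_{y\to x}\frac{F(y)-F(x)-\langle v,y-x\rangle}{\|y-x\|}\ge0$ (empty if $x\notin\mathrm{dom}F$), and the (limiting) subdifferential is $\partial F(x)=\{v:\exists x_k\to x, F(x_k)\to F(x), v_k\in\hat\partial F(x_k), v_k\to v\}$; $\partial_xQ$, $\partial_yQ$ are the limiting subdifferentials of the partial functions. A critical point of $L$ is $z$ with $0\in\partial L(z)$. A proper lsc $F$ has the KŁ property at $x^\ast\in\mathrm{dom}\,F$ if there exist $\eta\in(0,+\infty]$, a neighborhood $U$ of $x^\ast$ and a continuous concave $\varphi:[0,\eta)\to\mathbb{R}_+$ with $\varphi(0)=0$, $\varphi$ $C^1$ on $(0,\eta)$, $\varphi'>0$ on $(0,\eta)$, such that $\varphi'(F(x)-F(x^\ast))\,\mathrm{dist}(0,\partial F(x))\ge1$ for all $x\in U$ with $F(x^\ast)<F(x)<F(x^\ast)+\eta$; $F$ is a KŁ function if it has the KŁ property at every point of its domain. $(x_{-1},y_{-1})$ in step 2 is a given initial point (e.g. $(x_0,y_0)$). *)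

theory Defs
  imports "HOL-Analysis.Analysis"
begin

definition edom :: "('a \<Rightarrow> ereal) \<Rightarrow> 'a set" where
  "edom F = {x. F x \<noteq> \<infinity>}"

definition proper_fun :: "('a \<Rightarrow> ereal) \<Rightarrow> bool" where
  "proper_fun F \<longleftrightarrow> (\<forall>x. F x \<noteq> -\<infinity>) \<and> (\<exists>x. F x \<noteq> \<infinity>)"

definition lsc :: "('a::topological_space \<Rightarrow> ereal) \<Rightarrow> bool" where
  "lsc F \<longleftrightarrow> (\<forall>x. F x \<le> Liminf (at x) F)"

definition coercive :: "('a::real_normed_vector \<Rightarrow> ereal) \<Rightarrow> bool" where
  "coercive F \<longleftrightarrow> (F \<longlongrightarrow> \<infinity>) at_infinity"

definition bounded_below_fun :: "('a \<Rightarrow> ereal) \<Rightarrow> bool" where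
  "bounded_below_fun F \<longleftrightarrow> (\<exists>c::real. \<forall>x. ereal c \<le> F x)"

definition bregman :: "('a::real_inner \<Rightarrow> real) \<Rightarrow> ('a \<Rightarrow> 'a) \<Rightarrow> 'a \<Rightarrow> 'a \<Rightarrow> real" where
  "bregman phi dphi x y = phi x - phi y - dphi y \<bullet> (x - y)"

definition strongly_convex :: "real \<Rightarrow> ('a::real_normed_vector \<Rightarrow> real) \<Rightarrow> bool" where
  "strongly_convex \<theta> phi \<longleftrightarrow> convex_on UNIV (\<lambda>x. phi x - \<theta> / 2 * (norm x)\<^sup>2)"

definition frechet_subdiff :: "('a::real_inner \<Rightarrow> ereal) \<Rightarrow> 'a \<Rightarrow> 'a set" where
  "frechet_subdiff F x =
     (if x \<in> edom F then
        {v. 0 \<le> Liminf (at x) (\<lambda>y. (F y - F x - ereal (v \<bullet> (y - x))) / ereal (norm (y - x)))}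
      else {})"

definition lim_subdiff :: "('a::real_inner \<Rightarrow> ereal) \<Rightarrow> 'a \<Rightarrow> 'a set" where
  "lim_subdiff F x =
     {v. \<exists>X V. X \<longlonglongrightarrow> x \<and> (\<lambda>k. F (X k)) \<longlonglongrightarrow> F x \<and>
              (\<forall>k. V k \<in> frechet_subdiff F (X k)) \<and> V \<longlonglongrightarrow> v}"

text \<open>Kurdyka-Lojasiewicz property. The convention dist(0, empty set) = +\<infinity>
  is encoded by requiring the inequality only when the subdifferential is nonempty.\<close>
definition KL_at :: "('a::real_inner \<Rightarrow> ereal) \<Rightarrow> 'a \<Rightarrow> bool" where
  "KL_at F xs \<longleftrightarrow> xs \<in> edom F \<and>
     (\<exists>(\<eta>::ereal) U \<phi> \<phi>'. 0 < \<eta> \<and> open U \<and> xs \<in> U \<and>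
        continuous_on {s. 0 \<le> s \<and> ereal s < \<eta>} \<phi> \<and>
        concave_on {s. 0 \<le> s \<and> ereal s < \<eta>} \<phi> \<and>
        (\<forall>s. 0 \<le> s \<and> ereal s < \<eta> \<longrightarrow> 0 \<le> \<phi> s) \<and>
        \<phi> 0 = 0 \<and>
        (\<forall>s. 0 < s \<and> ereal s < \<eta> \<longrightarrow> (\<phi> has_real_derivative \<phi>' s) (at s) \<and> 0 < \<phi>' s) \<and>
        continuous_on {s. 0 < s \<and> ereal s < \<eta>} \<phi>' \<and>
        (\<forall>x\<in>U. F xs < F x \<and> F x < F xs + \<eta> \<longrightarrow>
            lim_subdiff F x \<noteq> {} \<longrightarrow>
            \<phi>' (real_of_ereal (F x - F xs)) * infdist 0 (lim_subdiff F x) \<ge> 1))"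

definition KL_function :: "('a::real_inner \<Rightarrow> ereal) \<Rightarrow> bool" where
  "KL_function F \<longleftrightarrow> (\<forall>x\<in>edom F. KL_at F x)"

definition critical_point :: "('a::real_inner \<Rightarrow> ereal) \<Rightarrow> 'a \<Rightarrow> bool" where
  "critical_point F z \<longleftrightarrow> 0 \<in> lim_subdiff F z"

end

theory Submission
  imports Defs
begin

lemma frechet_quot_real:
  fixes F :: "'a::real_inner \<Rightarrow> ereal"
  assumes "F y = ereal r" "y \<noteq> x"
  shows "(F y - ereal c - ereal (v \<bullet> (y - x))) / ereal (norm (y - x)) = ereal ((r - c - v \<bullet> (y - x)) / norm (y - x))"
  using assms by simp

lemma frechet_quot_inf:
  fixes F :: "'a::real_inner \<Rightarrow> ereal"
  assumes "F y = \<infinity>" "y \<noteq> x"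
  shows "(F y - ereal c - ereal (v \<bullet> (y - x))) / ereal (norm (y - x)) = \<infinity>"
  using assms by (simp add: ereal_divide_eq)

lemma frechet_iff:
  fixes F :: "'a::real_inner \<Rightarrow> ereal"
  assumes Fx: "F x = ereal c"
  shows "v \<in> frechet_subdiff F x \<longleftrightarrow>
     (\<forall>e>0. \<forall>\<^sub>F y in at x. ereal (c + v \<bullet> (y - x) - e * norm (y - x)) \<le> F y)"
proof -
  let ?X = "\<lambda>y. (F y - F x - ereal (v \<bullet> (y - x))) / ereal (norm (y - x))"
  have dom: "x \<in> edom F" using Fx by (simp add: edom_def)
  have "v \<in> frechet_subdiff F x \<longleftrightarrow> (\<forall>y0<0. \<forall>\<^sub>F y in at x. y0 < ?X y)"
    using dom by (simp add: frechet_subdiff_def le_Liminf_iff)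
  also have "\<dots> \<longleftrightarrow> (\<forall>e>0. \<forall>\<^sub>F y in at x. ereal (c + v \<bullet> (y - x) - e * norm (y - x)) \<le> F y)"
  proof
    assume H: "\<forall>y0<0. \<forall>\<^sub>F y in at x. y0 < ?X y"
    show "\<forall>e>0. \<forall>\<^sub>F y in at x. ereal (c + v \<bullet> (y - x) - e * norm (y - x)) \<le> F y"
    proof (intro allI impI)
      fix e :: real assume e: "e > 0"
      have "\<forall>\<^sub>F y in at x. ereal (-e) < ?X y" using H e by simp
      moreover have "\<forall>\<^sub>F y in at x. y \<noteq> x" by (rule eventually_neq_at_within)
      ultimately show "\<forall>\<^sub>F y in at x. ereal (c + v \<bullet> (y - x) - e * norm (y - x)) \<le> F y"
      proof eventually_elim
        case (elim y)
        show ?case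
        proof (cases "F y")
          case (real r)
          have eq: "?X y = ereal ((r - c - v \<bullet> (y - x)) / norm (y - x))"
            using frechet_quot_real[of F y r x c v] Fx real elim by simp
          have "ereal (-e) < ereal ((r - c - v \<bullet> (y - x)) / norm (y - x))"
            using elim eq by simp
          hence "-e < (r - c - v \<bullet> (y - x)) / norm (y - x)" by simp
          hence "-e * norm (y - x) < r - c - v \<bullet> (y - x)"
            using elim by (simp add: pos_less_divide_eq)
          thus ?thesis using real by simp
        next
          case PInf thus ?thesis by simp
        next
          case MInf
          thus ?thesis using elim Fx by simp
        qed
      qed
    qed
  next
    assume H: "\<forall>e>0. \<forall>\<^sub>F y in at x. ereal (c + v \<bullet> (y - x) - e * norm (y - x)) \<le> F y"
    show "\<forall>y0<0. \<forall>\<^sub>F y in at x. y0 < ?X y"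
    proof (intro allI impI)
      fix y0 :: ereal assume y0: "y0 < 0"
      obtain e where e: "e > 0" "y0 < ereal (-e)"
      proof (cases y0)
        case (real r)
        thus ?thesis using that[of "-r/2"] y0 by simp
      next
        case PInf thus ?thesis using y0 by simp
      next
        case MInf thus ?thesis using that[of 1] by simp
      qed
      have "\<forall>\<^sub>F y in at x. ereal (c + v \<bullet> (y - x) - e * norm (y - x)) \<le> F y" using H e by simp
      moreover have "\<forall>\<^sub>F y in at x. y \<noteq> x" by (rule eventually_neq_at_within)
      ultimately show "\<forall>\<^sub>F y in at x. y0 < ?X y"
      proof eventually_elim
        case (elim y)
        show ?case
        proof (cases "F y")
          case (real r)
          have "-e * norm (y - x) \<le> r - c - v \<bullet> (y - x)" using elim real by simp
          hence "-e \<le> (r - c - v \<bullet> (y - x)) / norm (y - x)"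
            using elim by (simp add: pos_le_divide_eq)
          have eq: "?X y = ereal ((r - c - v \<bullet> (y - x)) / norm (y - x))"
            using frechet_quot_real[of F y r x c v] Fx real elim by simp
          hence "ereal (-e) \<le> ?X y" using \<open>-e \<le> _\<close> by simp
          thus ?thesis using e by simp
        next
          case PInf have "?X y = \<infinity>" using frechet_quot_inf[of F y x c v] elim Fx PInf by simp
          thus ?thesis using y0 by (cases y0) auto
        next
          case MInf
          thus ?thesis using elim by simp
        qed
      qed
    qed
  qed
  finally show ?thesis .
qed

lemma deriv_eventually:
  fixes s :: "'a::real_inner \<Rightarrow> real"
  assumes "(s has_derivative (\<lambda>d. ds \<bullet> d)) (at x)" "e > 0"
  shows "\<forall>\<^sub>F y in at x. \<bar>s y - s x - ds \<bullet> (y - x)\<bar> \<le> e * norm (y - x)"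
proof -
  obtain d where d: "d > 0" "\<forall>y. norm (y - x) < d \<longrightarrow> norm (s y - s x - ds \<bullet> (y - x)) \<le> e * norm (y - x)"
    using assms unfolding has_derivative_within_alt by fastforce
  show ?thesis unfolding eventually_at using d by (auto simp: dist_norm)
qed

lemma frechet_add_smooth:
  fixes F :: "'a::real_inner \<Rightarrow> ereal"
  assumes v: "v \<in> frechet_subdiff F x" and Fx: "F x \<noteq> -\<infinity>"
    and s: "(s has_derivative (\<lambda>d. ds \<bullet> d)) (at x)"
  shows "v + ds \<in> frechet_subdiff (\<lambda>u. F u + ereal (s u)) x"
proof -
  have "x \<in> edom F" using v by (auto simp: frechet_subdiff_def split: if_splits)
  then obtain c where c: "F x = ereal c" using Fx by (cases "F x") (auto simp: edom_def)
  have c2: "F x + ereal (s x) = ereal (c + s x)" using c by simp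
  have H: "\<forall>e>0. \<forall>\<^sub>F y in at x. ereal (c + v \<bullet> (y - x) - e * norm (y - x)) \<le> F y"
    using v frechet_iff[of F x c, OF c] by simp
  show ?thesis unfolding frechet_iff[of "\<lambda>u. F u + ereal (s u)" x "c + s x", OF c2]
  proof (intro allI impI)
    fix e :: real assume e: "e > 0"
    have "\<forall>\<^sub>F y in at x. ereal (c + v \<bullet> (y - x) - (e/2) * norm (y - x)) \<le> F y"
      using H[rule_format, of "e/2"] e by simp
    moreover have "\<forall>\<^sub>F y in at x. \<bar>s y - s x - ds \<bullet> (y - x)\<bar> \<le> (e/2) * norm (y - x)"
      using deriv_eventually[OF s, of "e/2"] e by simp
    ultimately show "\<forall>\<^sub>F y in at x. ereal (c + s x + (v + ds) \<bullet> (y - x) - e * norm (y - x)) \<le> F y + ereal (s y)"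
    proof eventually_elim
      case (elim y)
      show ?case
      proof (cases "F y")
        case (real r)
        have "c + s x + (v + ds) \<bullet> (y - x) - e * norm (y - x) \<le> r + s y"
          using elim real abs_ge_minus_self[of "s y - s x - ds \<bullet> (y - x)"]
          by (simp add: inner_add_left)
        thus ?thesis using real by simp
      qed (use elim in auto)
    qed
  qed
qed

lemma frechet_imp_lim:
  "v \<in> frechet_subdiff F x \<Longrightarrow> v \<in> lim_subdiff F x"
  unfolding lim_subdiff_def
  by (rule CollectI, rule exI[of _ "\<lambda>_. x"], rule exI[of _ "\<lambda>_. v"]) auto

lemma fermat_frechet:
  fixes F :: "'a::real_inner \<Rightarrow> ereal"
  assumes "is_arg_min F (\<lambda>_. True) x" "F x = ereal c"
  shows "0 \<in> frechet_subdiff F x"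
  unfolding frechet_iff[of F x c, OF assms(2)]
proof (intro allI impI)
  fix e :: real assume "e > 0"
  have "\<forall>y. F x \<le> F y" using assms(1) by (auto simp: is_arg_min_def not_less)
  thus "\<forall>\<^sub>F y in at x. ereal (c + 0 \<bullet> (y - x) - e * norm (y - x)) \<le> F y"
    using assms(2) \<open>e > 0\<close>
    by (intro always_eventually allI) (metis order_trans ereal_less_eq(3) diff_ge_0_iff_ge
        inner_zero_left add.right_neutral mult_nonneg_nonneg less_imp_le norm_ge_zero diff_le_eq le_add_same_cancel1)
qed

lemma lim_add_smooth:
  fixes F :: "'a::real_inner \<Rightarrow> ereal"
  assumes v: "v \<in> lim_subdiff F x" and Fn: "\<And>u. F u \<noteq> -\<infinity>"
    and s: "\<And>u. (s has_derivative (\<lambda>d. ds u \<bullet> d)) (at u)"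
    and dsc: "continuous_on UNIV ds"
  shows "v + ds x \<in> lim_subdiff (\<lambda>u. F u + ereal (s u)) x"
proof -
  obtain X V where X: "X \<longlonglongrightarrow> x" "(\<lambda>k. F (X k)) \<longlonglongrightarrow> F x"
    "\<And>k. V k \<in> frechet_subdiff F (X k)" "V \<longlonglongrightarrow> v"
    using v unfolding lim_subdiff_def by blast
  have sc: "continuous_on UNIV s"
    using s by (meson continuous_at_imp_continuous_on has_derivative_continuous)
  have "(\<lambda>k. s (X k)) \<longlonglongrightarrow> s x"
    using continuous_on_tendsto_compose[OF sc X(1)] by simp
  hence 1: "(\<lambda>k. F (X k) + ereal (s (X k))) \<longlonglongrightarrow> F x + ereal (s x)"
    by (intro tendsto_add_ereal_nonneg X(2) Fn tendsto_ereal) auto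
  have "(\<lambda>k. ds (X k)) \<longlonglongrightarrow> ds x"
    using continuous_on_tendsto_compose[OF dsc X(1)] by simp
  hence 2: "(\<lambda>k. V k + ds (X k)) \<longlonglongrightarrow> v + ds x" by (intro tendsto_add X(4))
  have 3: "\<And>k. V k + ds (X k) \<in> frechet_subdiff (\<lambda>u. F u + ereal (s u)) (X k)"
    by (rule frechet_add_smooth[OF X(3) Fn s])
  show ?thesis unfolding lim_subdiff_def
    apply (rule CollectI)
    apply (rule exI[of _ X], rule exI[of _ "\<lambda>k. V k + ds (X k)"])
    using X(1) 1 2 3 by blast
qed

lemma close_seq:
  fixes X P :: "nat \<Rightarrow> 'a::metric_space"
  assumes "X \<longlonglongrightarrow> x" "\<And>k. dist (P k) (X k) < inverse (real (Suc k))"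
  shows "P \<longlonglongrightarrow> x"
  unfolding tendsto_iff
proof (intro allI impI)
  fix e :: real assume e: "e > 0"
  have "\<forall>\<^sub>F k in sequentially. dist (X k) x < e/2" using assms(1) e unfolding tendsto_iff by (meson half_gt_zero)
  moreover have "\<forall>\<^sub>F k in sequentially. inverse (real (Suc k)) < e/2"
    using LIMSEQ_inverse_real_of_nat e by (intro order_tendstoD) auto
  ultimately show "\<forall>\<^sub>F k in sequentially. dist (P k) x < e"
  proof eventually_elim
    case (elim k)
    thus ?case using assms(2)[of k] dist_triangle[of "P k" x "X k"] by linarith
  qed
qed

lemma lim_closed:
  fixes F :: "'a::real_inner \<Rightarrow> ereal"
  assumes X: "X \<longlonglongrightarrow> x" and G: "\<And>k. F (X k) = ereal (G k)" and Fx: "F x = ereal c"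
    and Gc: "G \<longlonglongrightarrow> c"
    and V: "\<And>k. V k \<in> lim_subdiff F (X k)" and Vv: "V \<longlonglongrightarrow> v"
  shows "v \<in> lim_subdiff F x"
proof -
  have "\<exists>p q r. dist p (X k) < inverse (real (Suc k)) \<and> dist q (V k) < inverse (real (Suc k)) \<and>
          q \<in> frechet_subdiff F p \<and> F p = ereal r \<and> dist r (G k) < inverse (real (Suc k))" for k
  proof -
    let ?d = "inverse (real (Suc k))"
    have d: "?d > 0" by simp
    obtain X' V' where X': "X' \<longlonglongrightarrow> X k" "(\<lambda>j. F (X' j)) \<longlonglongrightarrow> F (X k)"
      "\<And>j. V' j \<in> frechet_subdiff F (X' j)" "V' \<longlonglongrightarrow> V k"
      using V[of k] unfolding lim_subdiff_def by blast
    have "\<forall>\<^sub>F j in sequentially. dist (X' j) (X k) < ?d" using X'(1) d unfolding tendsto_iff by blast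
    moreover have "\<forall>\<^sub>F j in sequentially. dist (V' j) (V k) < ?d" using X'(4) d unfolding tendsto_iff by blast
    moreover have "\<forall>\<^sub>F j in sequentially. ereal (G k - ?d) < F (X' j)"
      using X'(2) G[of k] d by (intro order_tendstoD) auto
    moreover have "\<forall>\<^sub>F j in sequentially. F (X' j) < ereal (G k + ?d)"
      using X'(2) G[of k] d by (intro order_tendstoD) auto
    ultimately have "\<forall>\<^sub>F j in sequentially. dist (X' j) (X k) < ?d \<and> dist (V' j) (V k) < ?d \<and>
          ereal (G k - ?d) < F (X' j) \<and> F (X' j) < ereal (G k + ?d)"
      by eventually_elim auto
    then obtain j where j: "dist (X' j) (X k) < ?d" "dist (V' j) (V k) < ?d"
          "ereal (G k - ?d) < F (X' j)" "F (X' j) < ereal (G k + ?d)"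
      unfolding eventually_sequentially by blast
    then obtain r where r: "F (X' j) = ereal r" by (cases "F (X' j)") auto
    have "dist r (G k) < ?d" using j(3,4) r by (simp add: dist_real_def abs_less_iff)
    thus ?thesis using j X'(3)[of j] r by blast
  qed
  then obtain P W R where PWR: "\<And>k. dist (P k) (X k) < inverse (real (Suc k))"
    "\<And>k. dist (W k) (V k) < inverse (real (Suc k))" "\<And>k. W k \<in> frechet_subdiff F (P k)"
    "\<And>k. F (P k) = ereal (R k)" "\<And>k. dist (R k) (G k) < inverse (real (Suc k))"
    by metis
  have "P \<longlonglongrightarrow> x" by (rule close_seq[OF X PWR(1)])
  moreover have "W \<longlonglongrightarrow> v" by (rule close_seq[OF Vv PWR(2)])
  moreover have "R \<longlonglongrightarrow> c" by (rule close_seq[OF Gc PWR(5)])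
  hence "(\<lambda>k. F (P k)) \<longlonglongrightarrow> F x" using PWR(4) Fx by simp
  ultimately show ?thesis unfolding lim_subdiff_def using PWR(3) by blast
qed

lemma line_deriv:
  fixes f :: "'a::real_inner \<Rightarrow> real"
  assumes "\<And>u. (f has_derivative (\<lambda>d. df u \<bullet> d)) (at u)"
  shows "((\<lambda>t. f (y + t *\<^sub>R d)) has_real_derivative (df (y + t *\<^sub>R d) \<bullet> d)) (at t)"
proof -
  have l: "((\<lambda>t. y + t *\<^sub>R d) has_derivative (\<lambda>h. h *\<^sub>R d)) (at t)"
    by (auto intro!: derivative_eq_intros)
  have "((\<lambda>t. f (y + t *\<^sub>R d)) has_derivative (\<lambda>h. df (y + t *\<^sub>R d) \<bullet> (h *\<^sub>R d))) (at t)"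
    using has_derivative_compose[OF l assms] by (simp add: o_def)
  thus ?thesis unfolding has_field_derivative_def
    by (rule has_derivative_eq_rhs) (auto simp: fun_eq_iff)
qed

lemma descent:
  fixes f :: "'a::real_inner \<Rightarrow> real"
  assumes fd: "\<And>u. (f has_derivative (\<lambda>d. df u \<bullet> d)) (at u)" and lip: "Lf-lipschitz_on UNIV df"
  shows "f x \<le> f y + df y \<bullet> (x - y) + Lf/2 * (norm (x - y))\<^sup>2"
proof -
  define d where "d = x - y"
  define \<phi> where "\<phi> t = f (y + t *\<^sub>R d) - t * (df y \<bullet> d) - Lf/2 * t\<^sup>2 * (norm d)\<^sup>2" for t
  have D: "(\<phi> has_real_derivative (df (y + t *\<^sub>R d) \<bullet> d - df y \<bullet> d - Lf * t * (norm d)\<^sup>2)) (at t)" for t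
    unfolding \<phi>_def
    by (rule line_deriv[OF fd] derivative_eq_intros refl | simp)+ 
  have "\<phi> 1 \<le> \<phi> 0"
  proof (rule DERIV_nonpos_imp_nonincreasing[of 0 1 \<phi>])
    fix t :: real assume t: "0 \<le> t" "t \<le> 1"
    have "df (y + t *\<^sub>R d) \<bullet> d - df y \<bullet> d = (df (y + t *\<^sub>R d) - df y) \<bullet> d" by (simp add: inner_diff_left)
    also have "\<dots> \<le> norm (df (y + t *\<^sub>R d) - df y) * norm d" by (rule norm_cauchy_schwarz)
    also have "\<dots> \<le> (Lf * norm (t *\<^sub>R d)) * norm d"
      using lipschitz_on_normD[OF lip, of "y + t *\<^sub>R d" y] by (intro mult_right_mono) auto
    also have "\<dots> = Lf * t * (norm d)\<^sup>2" using t by (simp add: power2_eq_square)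
    finally show "\<exists>y. (\<phi> has_real_derivative y) (at t) \<and> y \<le> 0" using D[of t] by force
  qed simp
  thus ?thesis unfolding \<phi>_def d_def by simp
qed

lemma convex_tangent:
  fixes \<psi> :: "'a::real_inner \<Rightarrow> real"
  assumes cv: "convex_on UNIV \<psi>" and d: "\<And>u. (\<psi> has_derivative (\<lambda>h. G u \<bullet> h)) (at u)"
  shows "\<psi> y + G y \<bullet> (x - y) \<le> \<psi> x"
proof -
  define g where "g t = \<psi> (y + t *\<^sub>R (x - y))" for t
  have "convex_on UNIV g"
    unfolding g_def convex_on_def
  proof (intro conjI allI impI ballI)
    show "convex (UNIV :: real set)" by simp
  next
    fix s t :: real and u v :: real assume uv: "0 \<le> u" "0 \<le> v" "u + v = 1"
    have "y + (u * s + v * t) *\<^sub>R (x - y) = u *\<^sub>R (y + s *\<^sub>R (x - y)) + v *\<^sub>R (y + t *\<^sub>R (x - y))"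
      using uv by (simp add: algebra_simps scaleR_add_left[symmetric] del: scaleR_add_left)
    thus "\<psi> (y + (u *\<^sub>R s + v *\<^sub>R t) *\<^sub>R (x - y)) \<le> u * \<psi> (y + s *\<^sub>R (x - y)) + v * \<psi> (y + t *\<^sub>R (x - y))"
      using cv uv unfolding convex_on_def by simp
  qed
  moreover have "(g has_real_derivative (G y \<bullet> (x - y))) (at 0 within UNIV)"
    using line_deriv[OF d, of y "x - y" 0] unfolding g_def by simp
  ultimately have "g 1 - g 0 \<ge> G y \<bullet> (x - y) * (1 - 0)"
    by (intro convex_on_imp_above_tangent) auto
  thus ?thesis unfolding g_def by simp
qed

lemma bregman_lower:
  fixes phi :: "'a::real_inner \<Rightarrow> real"
  assumes sc: "strongly_convex \<theta> phi" and d: "\<And>u. (phi has_derivative (\<lambda>h. dphi u \<bullet> h)) (at u)"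
  shows "\<theta>/2 * (norm (x - y))\<^sup>2 \<le> bregman phi dphi x y"
proof -
  define \<psi> where "\<psi> u = phi u - \<theta>/2 * (norm u)\<^sup>2" for u
  have cv: "convex_on UNIV \<psi>" using sc unfolding strongly_convex_def \<psi>_def by simp
  have dd: "(\<psi> has_derivative (\<lambda>h. (dphi u - \<theta> *\<^sub>R u) \<bullet> h)) (at u)" for u
  proof -
    have n: "((\<lambda>u. (norm u)\<^sup>2) has_derivative (\<lambda>h. 2 * (u \<bullet> h))) (at u)"
      unfolding power2_norm_eq_inner
      by (rule has_derivative_eq_rhs[OF has_derivative_inner[OF has_derivative_ident has_derivative_ident]])
         (auto simp: fun_eq_iff inner_commute)
    have n2: "((\<lambda>u. \<theta>/2 * (norm u)\<^sup>2) has_derivative (\<lambda>h. \<theta>/2 * (2 * (u \<bullet> h)))) (at u)"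
      by (rule has_derivative_mult_right[OF n])
    show ?thesis unfolding \<psi>_def
      by (rule has_derivative_eq_rhs[OF has_derivative_diff[OF d n2]])
         (auto simp: fun_eq_iff inner_diff_left)
  qed
  have "\<psi> y + (dphi y - \<theta> *\<^sub>R y) \<bullet> (x - y) \<le> \<psi> x" by (rule convex_tangent[OF cv dd])
  hence "phi y - \<theta>/2 * (norm y)\<^sup>2 + dphi y \<bullet> (x - y) - \<theta> * (y \<bullet> (x - y)) \<le> phi x - \<theta>/2 * (norm x)\<^sup>2"
    unfolding \<psi>_def by (simp add: inner_diff_left)
  moreover have nn: "(norm (x - y))\<^sup>2 = (norm x)\<^sup>2 - 2 * (y \<bullet> (x - y)) - (norm y)\<^sup>2"
    by (simp add: power2_norm_eq_inner inner_diff_left inner_diff_right inner_commute)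
  have "\<theta>/2 * (norm (x - y))\<^sup>2 = \<theta>/2 * (norm x)\<^sup>2 - \<theta> * (y \<bullet> (x - y)) - \<theta>/2 * (norm y)\<^sup>2"
    unfolding nn by (simp add: algebra_simps)
  ultimately show ?thesis unfolding bregman_def by linarith
qed

lemma jensen3:
  fixes d E1 E2 a b :: real
  assumes "0 \<le> a" "0 \<le> b" "a + b < 1"
  shows "(d + a * E1 + b * E2)\<^sup>2 \<le> d\<^sup>2 / (1 - a - b) + a * E1\<^sup>2 + b * E2\<^sup>2"
proof -
  define w where "w = 1 - a - b"
  have w: "w > 0" using assms unfolding w_def by simp
  define t where "t = d / w"
  have dt: "d = w * t" using w unfolding t_def by simp
  have id: "(w * t + a * E1 + b * E2)\<^sup>2 + (w * a * (t - E1)\<^sup>2 + w * b * (t - E2)\<^sup>2 + a * b * (E1 - E2)\<^sup>2)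
      = w * t\<^sup>2 + a * E1\<^sup>2 + b * E2\<^sup>2"
    unfolding w_def by (simp add: power2_eq_square algebra_simps)
  have nn: "0 \<le> w * a * (t - E1)\<^sup>2 + w * b * (t - E2)\<^sup>2 + a * b * (E1 - E2)\<^sup>2"
    using w assms by (intro add_nonneg_nonneg mult_nonneg_nonneg) auto
  have "d\<^sup>2 / (1 - a - b) = w * t\<^sup>2" using w dt unfolding w_def[symmetric]
    by (simp add: power2_eq_square)
  moreover have "(d + a * E1 + b * E2)\<^sup>2 = (w * t + a * E1 + b * E2)\<^sup>2" using dt by simp
  ultimately show ?thesis using id nn by linarith
qed

lemma inertial_sq_summable:
  fixes d e :: "nat \<Rightarrow> real" and a b :: real
  assumes e0: "\<And>n. 0 \<le> e n" and d0: "\<And>n. 0 \<le> d n"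
    and rec: "\<And>n. e (n + 2) \<le> d (n + 2) + a * e (n + 1) + b * e n"
    and ab: "0 \<le> a" "0 \<le> b" "a + b < 1"
    and ds: "summable (\<lambda>n. (d n)\<^sup>2)"
  shows "summable (\<lambda>n. (e n)\<^sup>2)"
proof -
  define w where "w = 1 - a - b"
  have w: "w > 0" using ab unfolding w_def by simp
  define D where "D = suminf (\<lambda>n. (d n)\<^sup>2)"
  have sq: "(e (n+2))\<^sup>2 \<le> (d (n+2))\<^sup>2 / w + a * (e (n+1))\<^sup>2 + b * (e n)\<^sup>2" for n
  proof -
    have "(e (n+2))\<^sup>2 \<le> (d (n + 2) + a * e (n + 1) + b * e n)\<^sup>2"
      using rec[of n] e0[of "n+2"] by (intro power_mono) auto
    also have "\<dots> \<le> (d (n+2))\<^sup>2 / w + a * (e (n+1))\<^sup>2 + b * (e n)\<^sup>2"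
      unfolding w_def by (rule jensen3[OF ab])
    finally show ?thesis .
  qed
  have bnd: "(\<Sum>n<N+2. (e n)\<^sup>2) \<le> ((e 0)\<^sup>2 + (e 1)\<^sup>2 + D / w) / w" for N
  proof -
    let ?S = "\<Sum>n<N+2. (e n)\<^sup>2"
    have split: "?S = (e 0)\<^sup>2 + (e 1)\<^sup>2 + (\<Sum>n<N. (e (n+2))\<^sup>2)"
      by (simp add: sum.lessThan_Suc_shift numeral_2_eq_2 del: sum.lessThan_Suc)
    have "(\<Sum>n<N. (e (n+2))\<^sup>2) \<le> (\<Sum>n<N. (d (n+2))\<^sup>2 / w + a * (e (n+1))\<^sup>2 + b * (e n)\<^sup>2)"
      by (rule sum_mono[OF sq])
    also have "\<dots> = (\<Sum>n<N. (d (n+2))\<^sup>2) / w + a * (\<Sum>n<N. (e (n+1))\<^sup>2) + b * (\<Sum>n<N. (e n)\<^sup>2)"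
      by (simp add: sum.distrib sum_distrib_left sum_divide_distrib)
    also have "\<dots> \<le> D / w + a * ?S + b * ?S"
    proof -
      have "(\<Sum>n<N. (d (n+2))\<^sup>2) \<le> (\<Sum>n<N+2. (d n)\<^sup>2)"
        by (simp add: sum.lessThan_Suc_shift numeral_2_eq_2 del: sum.lessThan_Suc)
      also have "\<dots> \<le> D" unfolding D_def by (rule sum_le_suminf[OF ds]) auto
      finally have 1: "(\<Sum>n<N. (d (n+2))\<^sup>2) / w \<le> D / w" using w by (simp add: divide_right_mono)
      have "(\<Sum>n<N. (e (n+1))\<^sup>2) \<le> ?S"
      proof -
        have "(\<Sum>n<N. (e (n+1))\<^sup>2) \<le> (\<Sum>n<N+1. (e n)\<^sup>2)"
          by (simp add: sum.lessThan_Suc_shift del: sum.lessThan_Suc)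
        also have "\<dots> \<le> ?S" by (rule sum_mono2) auto
        finally show ?thesis .
      qed
      hence 2: "a * (\<Sum>n<N. (e (n+1))\<^sup>2) \<le> a * ?S" using ab by (simp add: mult_left_mono)
      have "(\<Sum>n<N. (e n)\<^sup>2) \<le> ?S" by (rule sum_mono2) auto
      hence 3: "b * (\<Sum>n<N. (e n)\<^sup>2) \<le> b * ?S" using ab by (simp add: mult_left_mono)
      show ?thesis using 1 2 3 by linarith
    qed
    finally have C: "(\<Sum>n<N. (e (n+2))\<^sup>2) \<le> D / w + a * ?S + b * ?S" .
    have "w * ?S = ?S - a * ?S - b * ?S" by (simp add: w_def algebra_simps)
    hence "w * ?S \<le> (e 0)\<^sup>2 + (e 1)\<^sup>2 + D / w" using C split by linarith
    thus ?thesis using w by (simp add: field_simps)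
  qed
  show ?thesis
  proof (rule summableI_nonneg_bounded)
    fix n
    have "(\<Sum>i<n. (e i)\<^sup>2) \<le> (\<Sum>i<n+2. (e i)\<^sup>2)" by (rule sum_mono2) auto
    also have "\<dots> \<le> ((e 0)\<^sup>2 + (e 1)\<^sup>2 + D / w) / w" by (rule bnd)
    finally show "(\<Sum>i<n. (e i)\<^sup>2) \<le> ((e 0)\<^sup>2 + (e 1)\<^sup>2 + D / w) / w" .
  qed simp
qed

lemma inertial_sum:
  fixes d e :: "nat \<Rightarrow> real" and a b :: real
  assumes e0: "\<And>n. 0 \<le> e n"
    and rec: "\<And>n. e (n + 2) \<le> d (n + 2) + a * e (n + 1) + b * e n"
    and ab: "0 \<le> a" "0 \<le> b"
  shows "(1 - a - b) * (\<Sum>n\<in>{k+2..k+2+m}. e n) + a * e (k+2+m) + b * (e (k+2+m) + e (k+1+m))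
     \<le> (\<Sum>n\<in>{k+2..k+2+m}. d n) + a * e (k+1) + b * (e (k+1) + e k)"
proof (induction m)
  case 0
  show ?case using rec[of k] by (simp add: algebra_simps)
next
  case (Suc m)
  have s1: "(\<Sum>n\<in>{k+2..k+2+Suc m}. e n) = (\<Sum>n\<in>{k+2..k+2+m}. e n) + e (k+2+Suc m)"
    by (simp add: add_Suc_right)
  have s2: "(\<Sum>n\<in>{k+2..k+2+Suc m}. d n) = (\<Sum>n\<in>{k+2..k+2+m}. d n) + d (k+2+Suc m)"
    by (simp add: add_Suc_right)
  have r: "e (k+2+Suc m) \<le> d (k+2+Suc m) + a * e (k+2+m) + b * e (k+1+m)"
    using rec[of "k+1+m"] by (simp add: algebra_simps)
  show ?case using Suc.IH r unfolding s1 s2 by (simp add: algebra_simps)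
qed

lemma kl_sum0:
  fixes d p :: "nat \<Rightarrow> real" and M :: real
  assumes "Suc k \<le> N"
  shows "(\<forall>n. Suc k \<le> n \<longrightarrow> n \<le> N \<longrightarrow> 2 * d n \<le> d (n - 1) + M * (p n - p (Suc n))) \<longrightarrow>
     (\<Sum>n\<in>{Suc k..N}. d n) + d N \<le> d k + M * (p (Suc k) - p (Suc N))"
  using assms
proof (induction N rule: dec_induct)
  case base
  show ?case by auto
next
  case (step N)
  show ?case
  proof
    assume H: "\<forall>n. Suc k \<le> n \<longrightarrow> n \<le> Suc N \<longrightarrow> 2 * d n \<le> d (n - 1) + M * (p n - p (Suc n))"
    have "(\<Sum>n\<in>{Suc k..Suc N}. d n) = (\<Sum>n\<in>{Suc k..N}. d n) + d (Suc N)"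
      using step.hyps by simp
    moreover have "2 * d (Suc N) \<le> d N + M * (p (Suc N) - p (Suc (Suc N)))"
      using H[rule_format, of "Suc N"] step.hyps(1) by simp
    moreover have "(\<Sum>n\<in>{Suc k..N}. d n) + d N \<le> d k + M * (p (Suc k) - p (Suc N))"
      using step.IH H by auto
    ultimately show "(\<Sum>n\<in>{Suc k..Suc N}. d n) + d (Suc N) \<le> d k + M * (p (Suc k) - p (Suc (Suc N)))"
      by (simp add: algebra_simps)
  qed
qed

lemma kl_sum:
  fixes d p :: "nat \<Rightarrow> real" and M :: real
  assumes "Suc k \<le> N"
    and H: "\<And>n. Suc k \<le> n \<Longrightarrow> n \<le> N \<Longrightarrow> 2 * d n \<le> d (n - 1) + M * (p n - p (Suc n))"
  shows "(\<Sum>n\<in>{Suc k..N}. d n) + d N \<le> d k + M * (p (Suc k) - p (Suc N))"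
  using kl_sum0[OF assms(1), of d M p] H by blast

lemma concave_deriv_ineq:
  fixes \<phi> \<phi>' :: "real \<Rightarrow> real" and \<eta> :: ereal
  assumes cv: "concave_on {s. 0 \<le> s \<and> ereal s < \<eta>} \<phi>"
    and der: "(\<phi> has_real_derivative \<phi>' s) (at s)"
    and t: "0 \<le> t" "t \<le> s" and s: "0 < s" "ereal s < \<eta>"
  shows "\<phi>' s * (s - t) \<le> \<phi> s - \<phi> t"
proof -
  obtain s' where s': "ereal s < ereal s'" "ereal s' < \<eta>" using ereal_dense2[OF s(2)] by blast
  have sub: "{0..s'} \<subseteq> {s. 0 \<le> s \<and> ereal s < \<eta>}"
  proof
    fix x assume x: "x \<in> {0..s'}"
    have "ereal x \<le> ereal s'" using x by simp
    hence "ereal x < \<eta>" using s'(2) by (rule le_less_trans)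
    thus "x \<in> {s. 0 \<le> s \<and> ereal s < \<eta>}" using x by simp
  qed
  have cvx: "convex_on {0..s'} (\<lambda>x. - \<phi> x)"
    using convex_on_subset[OF cv[unfolded concave_on_def] sub] by simp
  have der2: "((\<lambda>x. - \<phi> x) has_real_derivative - \<phi>' s) (at s within {0..s'})"
    using DERIV_minus[OF has_field_derivative_at_within[OF der]] .
  have int: "s \<in> interior {0..s'}" using s s' by simp
  have tA: "t \<in> {0..s'}" using t s s' by simp
  have "- \<phi> t - - \<phi> s \<ge> - \<phi>' s * (t - s)"
    by (rule convex_on_imp_above_tangent[OF cvx connected_Icc int tA der2])
  thus ?thesis by (simp add: algebra_simps)
qed

lemma amgm2:
  fixes x A B :: real
  assumes "0 \<le> A" "0 \<le> B" "0 \<le> x" "x\<^sup>2 \<le> A * B"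
  shows "2 * x \<le> A + B"
proof -
  have e1: "(A + B)\<^sup>2 = (A - B)\<^sup>2 + 4 * (A * B)" by (simp add: power2_eq_square algebra_simps)
  have e2: "(2 * x)\<^sup>2 = 4 * x\<^sup>2" by (simp add: power2_eq_square)
  have "(2 * x)\<^sup>2 \<le> (A + B)\<^sup>2"
    using assms(4) e1 e2 zero_le_power2[of "A - B"] by linarith
  moreover have "0 \<le> A + B" using assms by simp
  ultimately show ?thesis by (rule power2_le_imp_le)
qed

lemma sum_norm_diff_bound:
  fixes z :: "nat \<Rightarrow> 'a::real_normed_vector"
  assumes "K \<le> N"
  shows "norm (z (Suc N) - z K) \<le> (\<Sum>n\<in>{K..N}. norm (z (Suc n) - z n))"
proof -
  have "(\<Sum>n\<in>{K..N}. z (Suc n) - z n) = z (Suc N) - z K"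
    by (rule sum_Suc_diff) (use assms in linarith)
  hence "norm (z (Suc N) - z K) = norm (\<Sum>n\<in>{K..N}. z (Suc n) - z n)" by simp
  also have "\<dots> \<le> (\<Sum>n\<in>{K..N}. norm (z (Suc n) - z n))" by (rule norm_sum)
  finally show ?thesis .
qed

lemma KL_conv:
  fixes F :: "'z::euclidean_space \<Rightarrow> ereal" and G :: "'z \<Rightarrow> real" and z zh :: "nat \<Rightarrow> 'z"
  assumes Dc: "closed D" and FG: "\<And>u. u \<in> D \<Longrightarrow> F u = ereal (G u)" and Gc: "continuous_on D G"
    and zD: "\<And>k. z (Suc k) \<in> D" and bdd: "bounded (range z)"
    and c: "c > 0" and b: "b \<ge> 0"
    and dec: "\<And>k. G (z (Suc (Suc k))) + c * (norm (z (Suc (Suc k)) - zh (Suc k)))\<^sup>2 \<le> G (z (Suc k))"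
    and rel: "\<And>k. \<exists>w\<in>lim_subdiff F (z (Suc k)). norm w \<le> b * norm (z (Suc k) - zh k)"
    and inert: "\<And>k. norm (zh (Suc (Suc k)) - z (Suc (Suc k)))
        \<le> am * norm (z (Suc (Suc k)) - z (Suc k)) + bm * norm (z (Suc k) - z k)"
    and ab: "0 \<le> am" "0 \<le> bm" "am + bm < 1"
    and KL: "\<And>u. u \<in> D \<Longrightarrow> KL_at F u"
  shows "summable (\<lambda>k. norm (z (Suc k) - z k)) \<and> (\<exists>zs. z \<longlonglongrightarrow> zs \<and> 0 \<in> lim_subdiff F zs)"
proof -
  define d where "d k = norm (z (Suc k) - zh k)" for k
  define e where "e k = norm (z (Suc k) - z k)" for k
  have d0: "0 \<le> d k" for k unfolding d_def by simp
  have e0: "0 \<le> e k" for k unfolding e_def by simp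
  have erecS: "e (Suc (Suc n)) \<le> d (Suc (Suc n)) + am * e (Suc n) + bm * e n" for n
  proof -
    have "e (Suc (Suc n)) = norm ((z (Suc (Suc (Suc n))) - zh (Suc (Suc n))) + (zh (Suc (Suc n)) - z (Suc (Suc n))))"
      unfolding e_def by simp
    also have "\<dots> \<le> d (Suc (Suc n)) + norm (zh (Suc (Suc n)) - z (Suc (Suc n)))"
      unfolding d_def by (rule norm_triangle_ineq)
    also have "\<dots> \<le> d (Suc (Suc n)) + am * e (Suc n) + bm * e n"
      using inert[of n] unfolding e_def by simp
    finally show ?thesis .
  qed
  have erec: "e (n + 2) \<le> d (n + 2) + am * e (n + 1) + bm * e n" for n
    using erecS[of n] by (simp add: numeral_2_eq_2)
  have zD': "z n \<in> D" if "1 \<le> n" for n using zD[of "n - 1"] that by simp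
  obtain zs r where r: "strict_mono r" "(z \<circ> r) \<longlonglongrightarrow> zs"
    using bounded_imp_convergent_subsequence[OF bdd] by blast
  have rj: "j \<le> r j" for j using r(1) by (rule seq_suble)
  have evD: "\<forall>\<^sub>F j in sequentially. z (r j) \<in> D"
    unfolding eventually_sequentially
  proof (intro exI[of _ 1] allI impI)
    fix j :: nat assume "1 \<le> j"
    thus "z (r j) \<in> D" by (intro zD') (use rj[of j] in linarith)
  qed
  have zr: "(\<lambda>j. z (r j)) \<longlonglongrightarrow> zs" using r(2) by (simp add: o_def)
  have zsD: "zs \<in> D" by (rule Lim_in_closed_set[OF Dc evD _ zr]) simp
  have Gsub: "(\<lambda>j. G (z (r j))) \<longlonglongrightarrow> G zs"
    by (rule continuous_on_tendsto_compose[OF Gc zr zsD evD])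
  define Gs where "Gs = G zs"
  define Gz where "Gz k = G (z (Suc k))" for k
  have Gzdec: "decseq Gz"
  proof (rule decseq_SucI)
    fix k
    have "0 \<le> c * (norm (z (Suc (Suc k)) - zh (Suc k)))\<^sup>2" using c by simp
    thus "Gz (Suc k) \<le> Gz k" using dec[of k] unfolding Gz_def by simp
  qed
  have Gzlow: "Gs \<le> Gz k" for k
  proof -
    have "\<forall>\<^sub>F j in sequentially. G (z (r j)) \<le> Gz k"
      unfolding eventually_sequentially
    proof (intro exI allI impI)
      fix j assume j: "Suc (Suc k) \<le> j"
      hence rj1: "Suc (r j - 1) = r j" "k \<le> r j - 1" using rj[of j] by auto
      have "Gz (r j - 1) \<le> Gz k" by (rule decseqD[OF Gzdec rj1(2)])
      thus "G (z (r j)) \<le> Gz k" unfolding Gz_def rj1(1) .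
    qed
    thus ?thesis unfolding Gs_def by (intro tendsto_upperbound[OF Gsub]) auto
  qed
  have GzLim: "Gz \<longlonglongrightarrow> Gs"
  proof (rule tendstoI)
    fix \<epsilon> :: real assume \<epsilon>: "\<epsilon> > 0"
    have "\<forall>\<^sub>F j in sequentially. dist (G (z (r j))) Gs < \<epsilon>"
      using Gsub \<epsilon> unfolding Gs_def tendsto_iff by simp
    moreover have "\<forall>\<^sub>F j in sequentially. 1 \<le> j" by (rule eventually_ge_at_top)
    ultimately have "\<forall>\<^sub>F j in sequentially. dist (G (z (r j))) Gs < \<epsilon> \<and> 1 \<le> j"
      by (rule eventually_conj)
    then obtain N where N: "\<forall>n\<ge>N. dist (G (z (r n))) Gs < \<epsilon> \<and> 1 \<le> n"
      unfolding eventually_sequentially by blast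
    define j where "j = N"
    have j: "dist (G (z (r j))) Gs < \<epsilon>" "1 \<le> j" using N unfolding j_def by auto
    have rj1: "Suc (r j - 1) = r j" using rj[of j] j(2) by auto
    show "\<forall>\<^sub>F k in sequentially. dist (Gz k) Gs < \<epsilon>"
      unfolding eventually_sequentially
    proof (intro exI allI impI)
      fix k assume "r j \<le> k"
      hence "Gz k \<le> Gz (r j - 1)" by (intro decseqD[OF Gzdec]) auto
      hence "Gz k \<le> G (z (r j))" unfolding Gz_def rj1 .
      thus "dist (Gz k) Gs < \<epsilon>" using j(1) Gzlow[of k] by (simp add: dist_real_def)
    qed
  qed
  have dsq: "summable (\<lambda>k. (d k)\<^sup>2)"
  proof -
    have step: "c * (d (Suc k))\<^sup>2 \<le> Gz k - Gz (Suc k)" for k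
      using dec[of k] unfolding d_def Gz_def by simp
    have "summable (\<lambda>k. c * (d (Suc k))\<^sup>2)"
    proof (rule summableI_nonneg_bounded)
      fix n
      have "(\<Sum>k<n. c * (d (Suc k))\<^sup>2) \<le> (\<Sum>k<n. Gz k - Gz (Suc k))" by (rule sum_mono[OF step])
      also have "\<dots> = Gz 0 - Gz n" by (rule sum_lessThan_telescope')
      also have "\<dots> \<le> Gz 0 - Gs" using Gzlow[of n] by simp
      finally show "(\<Sum>k<n. c * (d (Suc k))\<^sup>2) \<le> Gz 0 - Gs" .
    qed (use c in simp)
    hence "summable (\<lambda>k. (d (Suc k))\<^sup>2)" using c by simp
    thus ?thesis by (subst (asm) summable_Suc_iff)
  qed
  have esq: "summable (\<lambda>k. (e k)\<^sup>2)"
    by (rule inertial_sq_summable[OF e0 d0 erec ab dsq])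
  have dlim: "d \<longlonglongrightarrow> 0"
  proof -
    have "(\<lambda>k. sqrt ((d k)\<^sup>2)) \<longlonglongrightarrow> sqrt 0"
      by (intro tendsto_real_sqrt summable_LIMSEQ_zero[OF dsq])
    thus ?thesis using d0 by simp
  qed
  have elim: "e \<longlonglongrightarrow> 0"
  proof -
    have "(\<lambda>k. sqrt ((e k)\<^sup>2)) \<longlonglongrightarrow> sqrt 0"
      by (intro tendsto_real_sqrt summable_LIMSEQ_zero[OF esq])
    thus ?thesis using e0 by simp
  qed
  from KL[OF zsD] obtain \<eta> U \<phi> \<phi>' where KLd: "0 < \<eta>" "open U" "zs \<in> U"
      "continuous_on {s. 0 \<le> s \<and> ereal s < \<eta>} \<phi>"
      "concave_on {s. 0 \<le> s \<and> ereal s < \<eta>} \<phi>"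
      "\<forall>s. 0 \<le> s \<and> ereal s < \<eta> \<longrightarrow> 0 \<le> \<phi> s" "\<phi> 0 = 0"
      "\<forall>s. 0 < s \<and> ereal s < \<eta> \<longrightarrow> (\<phi> has_real_derivative \<phi>' s) (at s) \<and> 0 < \<phi>' s"
      "\<forall>x\<in>U. F zs < F x \<and> F x < F zs + \<eta> \<longrightarrow> lim_subdiff F x \<noteq> {} \<longrightarrow>
            \<phi>' (real_of_ereal (F x - F zs)) * infdist 0 (lim_subdiff F x) \<ge> 1"
    unfolding KL_at_def by blast
  obtain \<rho> where \<rho>: "\<rho> > 0" "ball zs \<rho> \<subseteq> U" using KLd(2,3) open_contains_ball by blast
  define R where "R n = G (z n) - Gs" for n
  define p where "p n = \<phi> (R n)" for n
  define M where "M = b / c"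
  have M0: "0 \<le> M" unfolding M_def using b c by simp
  have R0: "0 \<le> R n" if "1 \<le> n" for n
    using Gzlow[of "n - 1"] that unfolding R_def Gz_def by simp
  have Rmono: "R n \<le> R m" if "1 \<le> m" "m \<le> n" for m n
    using decseqD[OF Gzdec, of "m - 1" "n - 1"] that unfolding R_def Gz_def by simp
  have FzG: "F (z n) = ereal (G (z n))" if "1 \<le> n" for n using FG[OF zD'[OF that]] .
  have Fzs: "F zs = ereal Gs" using FG[OF zsD] unfolding Gs_def .
  have p0: "0 \<le> p n" if "1 \<le> n" "ereal (R n) < \<eta>" for n
    using KLd(6) R0[OF that(1)] that(2) unfolding p_def by blast
  have KLstep: "2 * d n \<le> d (n - 1) + M * (p n - p (Suc n))"
    if n1: "1 \<le> n" and nb: "z n \<in> ball zs \<rho>" and n\<eta>: "ereal (R n) < \<eta>" for n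
  proof -
    obtain m where m: "n = Suc m" using n1 by (cases n) auto
    define s where "s = R n"
    define t where "t = R (Suc n)"
    have s0: "0 \<le> s" using R0[OF n1] unfolding s_def .
    have t0: "0 \<le> t" using R0[of "Suc n"] unfolding t_def by simp
    have decn: "t + c * (d n)\<^sup>2 \<le> s"
      using dec[of m] unfolding s_def t_def R_def d_def m by simp
    have cd0: "0 \<le> c * (d n)\<^sup>2" using c by simp
    have ts: "t \<le> s" using decn cd0 by linarith
    have t\<eta>: "ereal t < \<eta>" using ts n\<eta> unfolding s_def by (meson ereal_less_eq(3) le_less_trans)
    show ?thesis
    proof (cases "s = 0")
      case True
      hence "t = 0" using t0 ts by simp
      hence "c * (d n)\<^sup>2 \<le> 0" using decn True by simp
      hence "d n = 0" using c by (simp add: mult_le_0_iff)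
      moreover have "p n = p (Suc n)" unfolding p_def using True \<open>t = 0\<close> unfolding s_def t_def by simp
      ultimately show ?thesis using d0[of "n - 1"] by simp
    next
      case False
      hence spos: "0 < s" using s0 by simp
      obtain w where w: "w \<in> lim_subdiff F (z (Suc m))" "norm w \<le> b * d m"
        using rel[of m] unfolding d_def by blast
      have zU: "z n \<in> U" using nb \<rho>(2) by blast
      have c1: "F zs < F (z n)" using spos FzG[OF n1] Fzs unfolding s_def R_def by simp
      have c2: "F (z n) < F zs + \<eta>"
      proof (cases \<eta>)
        case (real h)
        thus ?thesis using n\<eta> FzG[OF n1] Fzs unfolding R_def by simp
      next
        case PInf thus ?thesis using FzG[OF n1] Fzs by simp
      next
        case MInf thus ?thesis using KLd(1) by simp
      qed
      have ne: "lim_subdiff F (z n) \<noteq> {}" using w(1) m by blast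
      have rs: "real_of_ereal (F (z n) - F zs) = s" using FzG[OF n1] Fzs unfolding s_def R_def by simp
      have kl: "1 \<le> \<phi>' s * infdist 0 (lim_subdiff F (z n))"
        using KLd(9) zU c1 c2 ne rs by auto
      have der: "(\<phi> has_real_derivative \<phi>' s) (at s)" and \<phi>'pos: "0 < \<phi>' s"
        using KLd(8) spos n\<eta> unfolding s_def by auto
      have "infdist 0 (lim_subdiff F (z n)) \<le> dist 0 w" using w(1) m by (intro infdist_le) simp
      hence "infdist 0 (lim_subdiff F (z n)) \<le> b * d (n - 1)" using w(2) m by simp
      hence kl2: "1 \<le> \<phi>' s * (b * d (n - 1))"
        using kl \<phi>'pos by (meson mult_left_mono less_imp_le order_trans)
      have conc: "\<phi>' s * (s - t) \<le> \<phi> s - \<phi> t"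
        by (rule concave_deriv_ineq[where \<phi>=\<phi> and \<phi>'=\<phi>' and \<eta>=\<eta> and s=s and t=t, OF KLd(5) der t0 ts spos]) (use n\<eta> s_def in simp)
      have h1: "(s - t) * 1 \<le> (s - t) * (\<phi>' s * (b * d (n - 1)))"
        by (rule mult_left_mono[OF kl2]) (use ts in simp)
      have h3: "(b * d (n - 1)) * (\<phi>' s * (s - t)) \<le> (b * d (n - 1)) * (\<phi> s - \<phi> t)"
        by (rule mult_left_mono[OF conc]) (simp add: b d0)
      have "c * (d n)\<^sup>2 \<le> (b * d (n - 1)) * (\<phi> s - \<phi> t)"
        using decn h1 h3 by (simp add: algebra_simps)
      hence "(d n)\<^sup>2 \<le> (b * d (n - 1)) * (\<phi> s - \<phi> t) / c"
        using c by (simp add: pos_le_divide_eq mult.commute)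
      also have "\<dots> = d (n - 1) * (M * (\<phi> s - \<phi> t))" unfolding M_def by simp
      finally have sq: "(d n)\<^sup>2 \<le> d (n - 1) * (M * (\<phi> s - \<phi> t))" .
      have "0 \<le> \<phi>' s * (s - t)" using \<phi>'pos ts by simp
      hence "0 \<le> M * (\<phi> s - \<phi> t)" using conc M0 by simp
      hence "2 * d n \<le> d (n - 1) + M * (\<phi> s - \<phi> t)"
        by (intro amgm2 d0 sq)
      thus ?thesis unfolding p_def s_def t_def .
    qed
  qed
  define \<gamma> where "\<gamma> = am + bm"
  have \<gamma>: "0 \<le> \<gamma>" "\<gamma> < 1" using ab unfolding \<gamma>_def by auto
  define small where "small k = d (k + 1) + M * p (k + 2) + am * e (k + 1) + bm * (e (k + 1) + e k)" for k
  have R2lim: "(\<lambda>k. R (k + 2)) \<longlonglongrightarrow> 0"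
  proof -
    have "(\<lambda>k. Gz (k + 1)) \<longlonglongrightarrow> Gs" by (rule LIMSEQ_ignore_initial_segment[OF GzLim])
    hence "(\<lambda>k. Gz (k + 1) - Gs) \<longlonglongrightarrow> Gs - Gs" by (intro tendsto_diff tendsto_const)
    moreover have "Gz (k + 1) - Gs = R (k + 2)" for k unfolding Gz_def R_def by (simp add: numeral_2_eq_2)
    ultimately show ?thesis by simp
  qed
  have ev\<eta>: "\<forall>\<^sub>F k in sequentially. ereal (R (k + 2)) < \<eta>"
  proof -
    have "(\<lambda>k. ereal (R (k + 2))) \<longlonglongrightarrow> ereal 0" using R2lim by (rule tendsto_ereal)
    thus ?thesis using KLd(1) by (intro order_tendstoD(2)) (auto simp: zero_ereal_def)
  qed
  have p2lim: "(\<lambda>k. p (k + 2)) \<longlonglongrightarrow> 0"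
  proof -
    have "\<forall>\<^sub>F k in sequentially. R (k + 2) \<in> {s. 0 \<le> s \<and> ereal s < \<eta>}"
      using ev\<eta> by eventually_elim (use R0 in auto)
    moreover have "(0::real) \<in> {s. 0 \<le> s \<and> ereal s < \<eta>}" using KLd(1) by (simp add: zero_ereal_def)
    ultimately have "(\<lambda>k. \<phi> (R (k + 2))) \<longlonglongrightarrow> \<phi> 0"
      by (intro continuous_on_tendsto_compose[OF KLd(4) R2lim])
    thus ?thesis unfolding p_def KLd(7) .
  qed
  have smalllim: "small \<longlonglongrightarrow> 0"
  proof -
    have d1: "(\<lambda>k. d (k + 1)) \<longlonglongrightarrow> 0" by (rule LIMSEQ_ignore_initial_segment[OF dlim])
    have e1: "(\<lambda>k. e (k + 1)) \<longlonglongrightarrow> 0" by (rule LIMSEQ_ignore_initial_segment[OF elim])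
    have "(\<lambda>k. d (k + 1) + M * p (k + 2) + am * e (k + 1) + bm * (e (k + 1) + e k))
        \<longlonglongrightarrow> 0 + M * 0 + am * 0 + bm * (0 + 0)"
      by (intro tendsto_add tendsto_mult tendsto_const d1 e1 elim p2lim)
    thus ?thesis unfolding small_def by simp
  qed
  have "\<forall>\<^sub>F k in sequentially. small k < (1 - \<gamma>) * \<rho> / 2"
    using smalllim \<gamma> \<rho>(1) by (intro order_tendstoD(2)) auto
  hence "\<forall>\<^sub>F k in sequentially. small k < (1 - \<gamma>) * \<rho> / 2 \<and> ereal (R (k + 2)) < \<eta>"
    using ev\<eta> by (rule eventually_conj)
  then obtain N0 where N0: "\<And>k. N0 \<le> k \<Longrightarrow> small k < (1 - \<gamma>) * \<rho> / 2 \<and> ereal (R (k + 2)) < \<eta>"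
    unfolding eventually_sequentially by blast
  have "\<forall>\<^sub>F j in sequentially. dist (z (r j)) zs < \<rho> / 2"
    using zr \<rho>(1) unfolding tendsto_iff by (meson half_gt_zero)
  moreover have "\<forall>\<^sub>F j in sequentially. N0 + 2 \<le> j" by (rule eventually_ge_at_top)
  ultimately have "\<forall>\<^sub>F j in sequentially. dist (z (r j)) zs < \<rho> / 2 \<and> N0 + 2 \<le> j"
    by (rule eventually_conj)
  then obtain J where J: "\<forall>n\<ge>J. dist (z (r n)) zs < \<rho> / 2 \<and> N0 + 2 \<le> n"
    unfolding eventually_sequentially by blast
  define k where "k = r J - 2"
  have kJ: "k + 2 = r J" "N0 \<le> k" using J rj[of J] unfolding k_def by auto
  have A1: "dist (z (k + 2)) zs < \<rho> / 2" using J kJ(1) by auto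
  have A2: "small k < (1 - \<gamma>) * \<rho> / 2" and A3: "ereal (R (k + 2)) < \<eta>" using N0[OF kJ(2)] by auto
  have R\<eta>: "ereal (R n) < \<eta>" if "k + 2 \<le> n" for n
  proof -
    have "R n \<le> R (k + 2)" by (rule Rmono) (use that in auto)
    thus ?thesis using A3 by (meson ereal_less_eq(3) le_less_trans)
  qed
  have bound: "(\<Sum>n\<in>{k+2..k+2+m}. e n) < \<rho> / 2"
    if inb: "\<And>n. k + 2 \<le> n \<Longrightarrow> n \<le> k + 2 + m \<Longrightarrow> z n \<in> ball zs \<rho>" for m
  proof -
    have ks: "(\<Sum>n\<in>{Suc (k+1)..k+2+m}. d n) + d (k+2+m) \<le> d (k+1) + M * (p (Suc (k+1)) - p (Suc (k+2+m)))"
    proof (rule kl_sum)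
      fix n assume n: "Suc (k + 1) \<le> n" "n \<le> k + 2 + m"
      show "2 * d n \<le> d (n - 1) + M * (p n - p (Suc n))"
        by (rule KLstep) (use n inb R\<eta> in auto)
    qed simp
    have pl: "0 \<le> p (Suc (k+2+m))" by (rule p0) (use R\<eta> in auto)
    have "(\<Sum>n\<in>{k+2..k+2+m}. d n) \<le> d (k+1) + M * p (k+2)"
    proof -
      have "{Suc (k+1)..k+2+m} = {k+2..k+2+m}" by auto
      moreover have "0 \<le> M * p (Suc (k+2+m))" using M0 pl by simp
      ultimately show ?thesis using ks d0[of "k+2+m"] by (simp add: algebra_simps)
    qed
    moreover have "(1 - am - bm) * (\<Sum>n\<in>{k+2..k+2+m}. e n) + am * e (k+2+m) + bm * (e (k+2+m) + e (k+1+m))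
     \<le> (\<Sum>n\<in>{k+2..k+2+m}. d n) + am * e (k+1) + bm * (e (k+1) + e k)"
      by (rule inertial_sum[OF e0 erec ab(1,2)])
    moreover have "0 \<le> am * e (k+2+m) + bm * (e (k+2+m) + e (k+1+m))"
      using ab e0 by (intro add_nonneg_nonneg mult_nonneg_nonneg) auto
    ultimately have "(1 - \<gamma>) * (\<Sum>n\<in>{k+2..k+2+m}. e n) \<le> small k"
      unfolding small_def \<gamma>_def by (simp add: algebra_simps)
    hence "(1 - \<gamma>) * (\<Sum>n\<in>{k+2..k+2+m}. e n) < (1 - \<gamma>) * (\<rho> / 2)" using A2 by simp
    thus ?thesis using \<gamma> by simp
  qed
  have inball: "\<forall>n. k + 2 \<le> n \<longrightarrow> n \<le> k + 2 + m \<longrightarrow> z n \<in> ball zs \<rho>" for m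
  proof (induction m)
    case 0
    show ?case using A1 \<rho>(1) by (auto simp: dist_commute)
  next
    case (Suc m)
    have B: "(\<Sum>n\<in>{k+2..k+2+m}. e n) < \<rho> / 2" by (rule bound) (use Suc.IH in blast)
    have "norm (z (Suc (k+2+m)) - z (k+2)) \<le> (\<Sum>n\<in>{k+2..k+2+m}. e n)"
      unfolding e_def by (rule sum_norm_diff_bound) simp
    hence "dist zs (z (Suc (k+2+m))) < \<rho>"
      using B A1 norm_triangle_ineq[of "z (Suc (k+2+m)) - z (k+2)" "z (k+2) - zs"]
      by (simp add: dist_norm norm_minus_commute)
    thus ?case using Suc.IH by (auto simp: le_Suc_eq)
  qed
  have esum: "summable e"
  proof (rule summableI_nonneg_bounded)
    fix N
    have "(\<Sum>n<N. e n) \<le> (\<Sum>n\<in>{..<k+2} \<union> {k+2..k+2+N}. e n)"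
      by (rule sum_mono2) (auto simp: e0)
    also have "\<dots> = (\<Sum>n<k+2. e n) + (\<Sum>n\<in>{k+2..k+2+N}. e n)"
      by (rule sum.union_disjoint) auto
    also have "\<dots> \<le> (\<Sum>n<k+2. e n) + \<rho> / 2"
      using bound[of N] inball[of N] by fastforce
    finally show "(\<Sum>n<N. e n) \<le> (\<Sum>n<k+2. e n) + \<rho> / 2" .
  qed (rule e0)
  have zconv: "z \<longlonglongrightarrow> zs"
  proof -
    have "summable (\<lambda>n. z (Suc n) - z n)" using esum unfolding e_def by (rule summable_norm_cancel)
    hence "(\<lambda>n. \<Sum>i<n. z (Suc i) - z i) \<longlonglongrightarrow> suminf (\<lambda>n. z (Suc n) - z n)" by (rule summable_LIMSEQ)
    hence "(\<lambda>n. z n - z 0) \<longlonglongrightarrow> suminf (\<lambda>n. z (Suc n) - z n)" by (simp add: sum_lessThan_telescope)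
    hence "(\<lambda>n. z n - z 0 + z 0) \<longlonglongrightarrow> suminf (\<lambda>n. z (Suc n) - z n) + z 0" by (intro tendsto_add tendsto_const)
    hence zl: "z \<longlonglongrightarrow> suminf (\<lambda>n. z (Suc n) - z n) + z 0" by simp
    hence "(z \<circ> r) \<longlonglongrightarrow> suminf (\<lambda>n. z (Suc n) - z n) + z 0" by (rule LIMSEQ_subseq_LIMSEQ[OF _ r(1)])
    hence "suminf (\<lambda>n. z (Suc n) - z n) + z 0 = zs" using r(2) by (rule LIMSEQ_unique)
    thus ?thesis using zl by simp
  qed
  have crit: "0 \<in> lim_subdiff F zs"
  proof -
    have "\<forall>k. \<exists>w. w \<in> lim_subdiff F (z (Suc k)) \<and> norm w \<le> b * d k" using rel unfolding d_def by blast
    then obtain W where W: "\<And>k. W k \<in> lim_subdiff F (z (Suc k))" "\<And>k. norm (W k) \<le> b * d k" by metis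
    have "(\<lambda>k. b * d k) \<longlonglongrightarrow> b * 0" by (intro tendsto_mult tendsto_const dlim)
    hence Wl: "W \<longlonglongrightarrow> 0" using W(2) by (intro Lim_null_comparison[of W "\<lambda>k. b * d k"]) auto
    have X: "(\<lambda>k. z (Suc k)) \<longlonglongrightarrow> zs" using LIMSEQ_ignore_initial_segment[OF zconv, of 1] by simp
    have "(\<lambda>k. G (z (Suc k))) \<longlonglongrightarrow> Gs" using GzLim unfolding Gz_def .
    show ?thesis
      by (rule lim_closed[OF X _ Fzs \<open>(\<lambda>k. G (z (Suc k))) \<longlonglongrightarrow> Gs\<close> W(1) Wl]) (rule FG[OF zD])
  qed
  show ?thesis using esum zconv crit unfolding e_def by blast
qed

lemma ereal_cancel_add:
  fixes A :: ereal
  assumes "A \<noteq> -\<infinity>"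
  shows "A + ereal a + ereal (- a) = A"
  using assms by (cases A) auto

lemma frechet_remove_smooth:
  fixes F :: "'a::real_inner \<Rightarrow> ereal"
  assumes v: "v \<in> frechet_subdiff (\<lambda>u. F u + ereal (s u)) x" and Fn: "\<And>u. F u \<noteq> -\<infinity>"
    and sd: "(s has_derivative (\<lambda>d. ds \<bullet> d)) (at x)"
  shows "v - ds \<in> frechet_subdiff F x"
proof -
  have sd': "((\<lambda>u. - s u) has_derivative (\<lambda>d. (- ds) \<bullet> d)) (at x)"
    using has_derivative_minus[OF sd] by simp
  have "F x + ereal (s x) \<noteq> -\<infinity>" using Fn[of x] by (cases "F x") auto
  hence "v + - ds \<in> frechet_subdiff (\<lambda>u. F u + ereal (s u) + ereal (- s u)) x"
    by (rule frechet_add_smooth[OF v _ sd'])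
  moreover have "(\<lambda>u. F u + ereal (s u) + ereal (- s u)) = F"
    using Fn by (simp add: fun_eq_iff ereal_cancel_add)
  ultimately show ?thesis by simp
qed

lemma pair_deriv:
  fixes f :: "'a::real_inner \<Rightarrow> real" and g :: "'b::real_inner \<Rightarrow> real"
  assumes f: "\<And>u. (f has_derivative (\<lambda>d. df u \<bullet> d)) (at u)"
    and g: "\<And>v. (g has_derivative (\<lambda>d. dg v \<bullet> d)) (at v)"
  shows "((\<lambda>z. f (fst z) + g (snd z)) has_derivative (\<lambda>d. (df (fst z), dg (snd z)) \<bullet> d)) (at z)"
proof -
  have 1: "((\<lambda>z. f (fst z)) has_derivative (\<lambda>d. df (fst z) \<bullet> fst d)) (at z)"
    using has_derivative_compose[OF has_derivative_fst[OF has_derivative_ident] f[of "fst z"]] by simp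
  have 2: "((\<lambda>z. g (snd z)) has_derivative (\<lambda>d. dg (snd z) \<bullet> snd d)) (at z)"
    using has_derivative_compose[OF has_derivative_snd[OF has_derivative_ident] g[of "snd z"]] by simp
  show ?thesis
    using has_derivative_add[OF 1 2] by (simp add: inner_prod_def)
qed

lemma bregman_deriv:
  fixes phi :: "'a::real_inner \<Rightarrow> real"
  assumes d: "\<And>u. (phi has_derivative (\<lambda>h. dphi u \<bullet> h)) (at u)"
  shows "((\<lambda>u. p \<bullet> u + bregman phi dphi u a) has_derivative (\<lambda>h. (p + dphi u - dphi a) \<bullet> h)) (at u)"
  unfolding bregman_def
  by (rule has_derivative_eq_rhs, (rule derivative_eq_intros d refl)+)
     (auto simp: fun_eq_iff inner_add_left inner_diff_left)

lemma bregman_self [simp]: "bregman phi dphi a a = 0"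
  by (simp add: bregman_def)

theorem theorem3p1:
  fixes f :: "'a::euclidean_space \<Rightarrow> real" and g :: "'b::euclidean_space \<Rightarrow> real"
    and Q :: "'a \<times> 'b \<Rightarrow> ereal" and L :: "'a \<times> 'b \<Rightarrow> ereal"
    and df :: "'a \<Rightarrow> 'a" and dg :: "'b \<Rightarrow> 'b"
    and Lf Lg :: real
    and phi1 :: "'a \<Rightarrow> real" and dphi1 :: "'a \<Rightarrow> 'a"
    and phi2 :: "'b \<Rightarrow> real" and dphi2 :: "'b \<Rightarrow> 'b"
    and \<theta>1 \<theta>2 \<eta>1 \<eta>2 :: real
    and q :: "'a \<times> 'b \<Rightarrow> real" and dxq :: "'a \<Rightarrow> 'b \<Rightarrow> 'a" and h :: "'a \<Rightarrow> ereal"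
    and x xh :: "nat \<Rightarrow> 'a" and y yh :: "nat \<Rightarrow> 'b"
    and xm1 :: 'a and ym1 :: 'b
    and \<alpha> \<beta> :: "nat \<Rightarrow> real" and \<alpha>max \<beta>max :: real
  assumes L_def: "\<And>z. L z = ereal (f (fst z)) + Q z + ereal (g (snd z))"
    \<comment> \<open>(A1)\<close>
    and L_bdd: "bounded_below_fun L"
    and f_grad: "\<And>u. (f has_derivative (\<lambda>d. df u \<bullet> d)) (at u)"
    and g_grad: "\<And>v. (g has_derivative (\<lambda>d. dg v \<bullet> d)) (at v)"
    and df_cont: "continuous_on UNIV df" and dg_cont: "continuous_on UNIV dg"
    and df_lip: "Lf-lipschitz_on UNIV df" and dg_lip: "Lg-lipschitz_on UNIV dg"
    and Q_proper: "proper_fun Q" and Q_lsc: "lsc Q"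
    and phi1_grad: "\<And>u. (phi1 has_derivative (\<lambda>d. dphi1 u \<bullet> d)) (at u)"
    and phi2_grad: "\<And>v. (phi2 has_derivative (\<lambda>d. dphi2 v \<bullet> d)) (at v)"
    and phi1_sc: "strongly_convex \<theta>1 phi1" and phi2_sc: "strongly_convex \<theta>2 phi2"
    and \<theta>1_gt: "\<theta>1 > Lf" and \<theta>2_gt: "\<theta>2 > Lg"
    and dphi1_lip: "\<eta>1-lipschitz_on UNIV dphi1" and dphi2_lip: "\<eta>2-lipschitz_on UNIV dphi2"
    \<comment> \<open>(A2)\<close>
    and L_coercive: "coercive L"
    and domQ_closed: "closed (edom Q)"
    and partial_subdiff: "\<And>u v. (u, v) \<in> edom Q \<Longrightarrow>
          lim_subdiff (\<lambda>u'. Q (u', v)) u \<times> lim_subdiff (\<lambda>v'. Q (u, v')) v \<subseteq> lim_subdiff Q (u, v)"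
    and Q_split: "\<And>u v. Q (u, v) = ereal (q (u, v)) + h u"
    and h_cont: "continuous_on (edom h) h"
    and q_cont: "continuous_on (edom Q) q"
    and q_grad: "\<And>u v. ((\<lambda>u'. q (u', v)) has_derivative (\<lambda>d. dxq u v \<bullet> d)) (at u)"
    and dxq_cont: "\<And>v. continuous_on UNIV (\<lambda>u. dxq u v)"
    and dxq_lip: "\<And>D1 D2. bounded D1 \<Longrightarrow> bounded D2 \<Longrightarrow> D1 \<times> D2 \<subseteq> edom Q \<Longrightarrow>
          \<exists>\<xi>>0. \<forall>ub\<in>D1. \<forall>v\<in>D2. \<forall>vb\<in>D2. norm (dxq ub v - dxq ub vb) \<le> \<xi> * norm (v - vb)"
    \<comment> \<open>KL\<close>
    and L_KL: "KL_function L"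
    \<comment> \<open>algorithm parameters\<close>
    and \<alpha>max_nn: "0 \<le> \<alpha>max" and \<beta>max_nn: "0 \<le> \<beta>max" and \<alpha>\<beta>_lt: "\<alpha>max + \<beta>max < 1"
    and \<alpha>_range: "\<And>k. \<alpha> k \<in> {0..\<alpha>max}" and \<beta>_range: "\<And>k. \<beta> k \<in> {0..\<beta>max}"
    \<comment> \<open>algorithm\<close>
    and init: "xh 0 = x 0" "yh 0 = y 0"
    and step_x: "\<And>k. is_arg_min
          (\<lambda>u. Q (u, yh k) + ereal (df (xh k) \<bullet> u) + ereal (bregman phi1 dphi1 u (xh k)))
          (\<lambda>_. True) (x (Suc k))"
    and step_y: "\<And>k. is_arg_min
          (\<lambda>v. Q (x (Suc k), v) + ereal (dg (yh k) \<bullet> v) + ereal (bregman phi2 dphi2 v (yh k)))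
          (\<lambda>_. True) (y (Suc k))"
    and step_hat: "\<And>k.
          let xp = (if k = 0 then xm1 else x (k - 1));
              yp = (if k = 0 then ym1 else y (k - 1));
              u = x (Suc k) + \<alpha> k *\<^sub>R (x (Suc k) - x k) + \<beta> k *\<^sub>R (x k - xp);
              v = y (Suc k) + \<alpha> k *\<^sub>R (y (Suc k) - y k) + \<beta> k *\<^sub>R (y k - yp)
          in (xh (Suc k), yh (Suc k)) =
             (if L (u, v) \<le> L (x (Suc k), y (Suc k)) then (u, v) else (x (Suc k), y (Suc k)))"
  shows "summable (\<lambda>k. norm ((x (Suc k), y (Suc k)) - (x k, y k))) \<and>
         (\<exists>zs. (\<lambda>k. (x k, y k)) \<longlonglongrightarrow> zs \<and> critical_point L zs)"
proof -
  define z where "z k = (x k, y k)" for k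
  define zh where "zh k = (xh k, yh k)" for k
  have Qn: "Q w \<noteq> -\<infinity>" for w using Q_proper unfolding proper_fun_def by blast
  have hn: "h u \<noteq> -\<infinity>" for u using Qn[of "(u, undefined)"] Q_split[of u undefined] by auto
  obtain w0 where w0: "Q w0 \<noteq> \<infinity>" using Q_proper unfolding proper_fun_def by blast
  define u0 where "u0 = fst w0"
  have hu0: "h u0 \<noteq> \<infinity>"
    using w0 Q_split[of "fst w0" "snd w0"] unfolding u0_def by (cases "h (fst w0)") auto
  have domQ: "(u, v) \<in> edom Q \<longleftrightarrow> h u \<noteq> \<infinity>" for u v
    using Q_split[of u v] by (cases "h u") (auto simp: edom_def)
  have Qfin: "Q (u, v) = ereal (q (u, v) + real_of_ereal (h u))" if "h u \<noteq> \<infinity>" for u v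
    using Q_split[of u v] that hn[of u] by (cases "h u") auto
  have Lalt: "L w = Q w + ereal (f (fst w) + g (snd w))" for w
    using L_def[of w] Qn[of w] by (cases "Q w") auto
  have hx: "h (x (Suc k)) \<noteq> \<infinity>" for k
  proof -
    let ?\<Phi> = "\<lambda>u. Q (u, yh k) + ereal (df (xh k) \<bullet> u) + ereal (bregman phi1 dphi1 u (xh k))"
    have "?\<Phi> (x (Suc k)) \<le> ?\<Phi> u0" using step_x[of k] by (auto simp: is_arg_min_def not_less)
    moreover have "?\<Phi> u0 \<noteq> \<infinity>" using Qfin[OF hu0, of "yh k"] by simp
    ultimately have "?\<Phi> (x (Suc k)) \<noteq> \<infinity>" by auto
    hence "Q (x (Suc k), yh k) \<noteq> \<infinity>" by auto
    thus ?thesis using domQ[of "x (Suc k)" "yh k"] by (simp add: edom_def)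
  qed
  have zD: "z (Suc k) \<in> edom Q" for k unfolding z_def using domQ hx by simp
  define G where "G w = f (fst w) + (q w + real_of_ereal (h (fst w))) + g (snd w)" for w
  have LG: "L w = ereal (G w)" if "w \<in> edom Q" for w
  proof -
    obtain u v where w: "w = (u, v)" by (cases w)
    have "h u \<noteq> \<infinity>" using that domQ unfolding w by simp
    thus ?thesis unfolding Lalt w G_def using Qfin by simp
  qed
  have fc: "continuous_on UNIV f" using f_grad
    by (meson continuous_at_imp_continuous_on has_derivative_continuous)
  have gc: "continuous_on UNIV g" using g_grad
    by (meson continuous_at_imp_continuous_on has_derivative_continuous)
  have Gc: "continuous_on (edom Q) G"
  proof -
    have hr: "continuous_on (edom h) (real_of_ereal \<circ> h)"
      using h_cont continuous_on_iff_real[of "edom h" h] hn by (auto simp: edom_def)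
    have fstD: "fst w \<in> edom h" if "w \<in> edom Q" for w
    proof -
      have "h (fst w) \<noteq> \<infinity>" using that domQ[of "fst w" "snd w"] by simp
      thus ?thesis by (simp add: edom_def)
    qed
    have "continuous_on (edom Q) (\<lambda>w. (real_of_ereal \<circ> h) (fst w))"
      by (rule continuous_on_compose2[OF hr continuous_on_fst[OF continuous_on_id]])
         (use fstD in auto)
    moreover have "continuous_on (edom Q) (\<lambda>w. f (fst w))"
      by (rule continuous_on_compose2[OF fc continuous_on_fst[OF continuous_on_id]]) auto
    moreover have "continuous_on (edom Q) (\<lambda>w. g (snd w))"
      by (rule continuous_on_compose2[OF gc continuous_on_snd[OF continuous_on_id]]) auto
    ultimately show ?thesis unfolding G_def o_def
      by (intro continuous_on_add q_cont)
  qed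
  define c where "c = min (\<theta>1 - Lf) (\<theta>2 - Lg) / 2"
  have c0: "c > 0" using \<theta>1_gt \<theta>2_gt unfolding c_def by simp
  have descent_step: "G (z (Suc k)) + c * (norm (z (Suc k) - zh k))\<^sup>2 \<le> G (zh k)"
    if hzh: "h (xh k) \<noteq> \<infinity>" for k
  proof -
    define a where "a = xh k"
    define bb where "bb = yh k"
    define x1 where "x1 = x (Suc k)"
    define y1 where "y1 = y (Suc k)"
    have ha: "h a \<noteq> \<infinity>" using hzh a_def by simp
    have hx1: "h x1 \<noteq> \<infinity>" using hx x1_def by simp
    have ax: "Q (x1, bb) + ereal (df a \<bullet> x1) + ereal (bregman phi1 dphi1 x1 a)
        \<le> Q (a, bb) + ereal (df a \<bullet> a) + ereal (bregman phi1 dphi1 a a)"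
      using step_x[of k] unfolding a_def bb_def x1_def by (auto simp: is_arg_min_def not_less simp del: bregman_self)
    hence ax': "q (x1,bb) + real_of_ereal (h x1) + df a \<bullet> x1 + bregman phi1 dphi1 x1 a
        \<le> q (a,bb) + real_of_ereal (h a) + df a \<bullet> a"
      using Qfin[OF ha, of bb] Qfin[OF hx1, of bb] by simp
    have ay: "Q (x1, y1) + ereal (dg bb \<bullet> y1) + ereal (bregman phi2 dphi2 y1 bb)
        \<le> Q (x1, bb) + ereal (dg bb \<bullet> bb) + ereal (bregman phi2 dphi2 bb bb)"
      using step_y[of k] unfolding bb_def x1_def y1_def by (auto simp: is_arg_min_def not_less simp del: bregman_self)
    hence ay': "q (x1,y1) + real_of_ereal (h x1) + dg bb \<bullet> y1 + bregman phi2 dphi2 y1 bb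
        \<le> q (x1,bb) + real_of_ereal (h x1) + dg bb \<bullet> bb"
      using Qfin[OF hx1, of bb] Qfin[OF hx1, of y1] by simp
    have fd: "f x1 \<le> f a + df a \<bullet> (x1 - a) + Lf/2 * (norm (x1 - a))\<^sup>2"
      by (rule descent[OF f_grad df_lip])
    have gd: "g y1 \<le> g bb + dg bb \<bullet> (y1 - bb) + Lg/2 * (norm (y1 - bb))\<^sup>2"
      by (rule descent[OF g_grad dg_lip])
    have b1: "\<theta>1/2 * (norm (x1 - a))\<^sup>2 \<le> bregman phi1 dphi1 x1 a"
      by (rule bregman_lower[OF phi1_sc phi1_grad])
    have b2: "\<theta>2/2 * (norm (y1 - bb))\<^sup>2 \<le> bregman phi2 dphi2 y1 bb"
      by (rule bregman_lower[OF phi2_sc phi2_grad])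
    have nz: "(norm (z (Suc k) - zh k))\<^sup>2 = (norm (x1 - a))\<^sup>2 + (norm (y1 - bb))\<^sup>2"
      unfolding z_def zh_def x1_def y1_def a_def bb_def by (simp add: norm_Pair)
    have c1: "c * (norm (x1 - a))\<^sup>2 \<le> \<theta>1/2 * (norm (x1 - a))\<^sup>2 - Lf/2 * (norm (x1 - a))\<^sup>2"
    proof -
      have "c * (norm (x1 - a))\<^sup>2 \<le> (\<theta>1 - Lf)/2 * (norm (x1 - a))\<^sup>2"
        by (rule mult_right_mono) (auto simp: c_def)
      thus ?thesis by (simp add: algebra_simps)
    qed
    have c2: "c * (norm (y1 - bb))\<^sup>2 \<le> \<theta>2/2 * (norm (y1 - bb))\<^sup>2 - Lg/2 * (norm (y1 - bb))\<^sup>2"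
    proof -
      have "c * (norm (y1 - bb))\<^sup>2 \<le> (\<theta>2 - Lg)/2 * (norm (y1 - bb))\<^sup>2"
        by (rule mult_right_mono) (auto simp: c_def)
      thus ?thesis by (simp add: algebra_simps)
    qed
    have l1: "df a \<bullet> (x1 - a) = df a \<bullet> x1 - df a \<bullet> a" by (simp add: inner_diff_right)
    have l2: "dg bb \<bullet> (y1 - bb) = dg bb \<bullet> y1 - dg bb \<bullet> bb" by (simp add: inner_diff_right)
    have e1: "G (z (Suc k)) = f x1 + (q (x1, y1) + real_of_ereal (h x1)) + g y1"
      unfolding G_def z_def x1_def y1_def by simp
    have e2: "G (zh k) = f a + (q (a, bb) + real_of_ereal (h a)) + g bb"
      unfolding G_def zh_def a_def bb_def by simp
    have e3: "c * (norm (z (Suc k) - zh k))\<^sup>2 = c * (norm (x1 - a))\<^sup>2 + c * (norm (y1 - bb))\<^sup>2"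
      unfolding nz by (simp add: algebra_simps)
    show ?thesis using ax' ay' fd gd b1 b2 c1 c2 l1 l2 e1 e2 e3 by linarith
  qed
  have hzL: "h (xh k) \<noteq> \<infinity> \<longleftrightarrow> zh k \<in> edom Q" for k unfolding zh_def using domQ by simp
  have Lstep: "L (z (Suc k)) \<le> L (zh k)" for k
  proof (cases "h (xh k) = \<infinity>")
    case True
    hence "L (zh k) = \<infinity>" unfolding Lalt zh_def using Q_split by simp
    thus ?thesis by simp
  next
    case False
    have "G (z (Suc k)) \<le> G (zh k)" using descent_step[OF False] c0 by (smt (verit) mult_nonneg_nonneg zero_le_power2)
    thus ?thesis using LG[OF zD[of k]] LG[of "zh k"] False hzL by simp
  qed
  define zp where "zp k = (if k = 0 then (xm1, ym1) else z (k - 1))" for k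
  have hat: "zh (Suc k) = z (Suc k) \<or> (L (zh (Suc k)) \<le> L (z (Suc k)) \<and>
      zh (Suc k) - z (Suc k) = \<alpha> k *\<^sub>R (z (Suc k) - z k) + \<beta> k *\<^sub>R (z k - zp k))" for k
  proof -
    define xp where "xp = (if k = 0 then xm1 else x (k - 1))"
    define yp where "yp = (if k = 0 then ym1 else y (k - 1))"
    define u where "u = x (Suc k) + \<alpha> k *\<^sub>R (x (Suc k) - x k) + \<beta> k *\<^sub>R (x k - xp)"
    define v where "v = y (Suc k) + \<alpha> k *\<^sub>R (y (Suc k) - y k) + \<beta> k *\<^sub>R (y k - yp)"
    have H: "(xh (Suc k), yh (Suc k)) = (if L (u, v) \<le> L (x (Suc k), y (Suc k)) then (u, v) else (x (Suc k), y (Suc k)))"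
      using step_hat[of k] unfolding Let_def xp_def yp_def u_def v_def by simp
    have zpk: "zp k = (xp, yp)" unfolding zp_def xp_def yp_def z_def by simp
    show ?thesis
    proof (cases "L (u, v) \<le> L (x (Suc k), y (Suc k))")
      case True
      hence "zh (Suc k) = (u, v)" using H unfolding zh_def by simp
      moreover have "(u, v) - z (Suc k) = \<alpha> k *\<^sub>R (z (Suc k) - z k) + \<beta> k *\<^sub>R (z k - zp k)"
        unfolding zpk z_def u_def v_def by simp
      ultimately show ?thesis using True unfolding z_def by simp
    next
      case False
      hence "zh (Suc k) = z (Suc k)" using H unfolding zh_def z_def by simp
      thus ?thesis by simp
    qed
  qed
  have Lhat: "L (zh (Suc k)) \<le> L (z (Suc k))" for k using hat[of k] by auto
  have zhD: "zh (Suc k) \<in> edom Q" for k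
  proof -
    have "L (zh (Suc k)) \<noteq> \<infinity>" using Lhat[of k] LG[OF zD[of k]] by auto
    thus ?thesis unfolding edom_def using Lalt[of "zh (Suc k)"] by auto
  qed
  have dec: "G (z (Suc (Suc k))) + c * (norm (z (Suc (Suc k)) - zh (Suc k)))\<^sup>2 \<le> G (z (Suc k))" for k
  proof -
    have "G (zh (Suc k)) \<le> G (z (Suc k))" using Lhat[of k] LG[OF zD[of k]] LG[OF zhD[of k]] by simp
    moreover have "h (xh (Suc k)) \<noteq> \<infinity>" using zhD hzL by blast
    ultimately show ?thesis using descent_step[of "Suc k"] by simp
  qed
  have inert: "norm (zh (Suc (Suc k)) - z (Suc (Suc k)))
        \<le> \<alpha>max * norm (z (Suc (Suc k)) - z (Suc k)) + \<beta>max * norm (z (Suc k) - z k)" for k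
  proof -
    have nn: "0 \<le> \<alpha>max * norm (z (Suc (Suc k)) - z (Suc k)) + \<beta>max * norm (z (Suc k) - z k)"
      using \<alpha>max_nn \<beta>max_nn by simp
    have zp: "zp (Suc k) = z k" unfolding zp_def by simp
    from hat[of "Suc k"] show ?thesis
    proof
      assume "zh (Suc (Suc k)) = z (Suc (Suc k))"
      thus ?thesis using nn by simp
    next
      assume "L (zh (Suc (Suc k))) \<le> L (z (Suc (Suc k))) \<and>
        zh (Suc (Suc k)) - z (Suc (Suc k)) = \<alpha> (Suc k) *\<^sub>R (z (Suc (Suc k)) - z (Suc k)) + \<beta> (Suc k) *\<^sub>R (z (Suc k) - zp (Suc k))"
      hence eq: "zh (Suc (Suc k)) - z (Suc (Suc k)) = \<alpha> (Suc k) *\<^sub>R (z (Suc (Suc k)) - z (Suc k)) + \<beta> (Suc k) *\<^sub>R (z (Suc k) - z k)"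
        using zp by simp
      have "norm (zh (Suc (Suc k)) - z (Suc (Suc k))) \<le> norm (\<alpha> (Suc k) *\<^sub>R (z (Suc (Suc k)) - z (Suc k))) + norm (\<beta> (Suc k) *\<^sub>R (z (Suc k) - z k))"
        unfolding eq by (rule norm_triangle_ineq)
      also have "\<dots> = \<bar>\<alpha> (Suc k)\<bar> * norm (z (Suc (Suc k)) - z (Suc k)) + \<bar>\<beta> (Suc k)\<bar> * norm (z (Suc k) - z k)"
        by simp
      also have "\<dots> \<le> \<alpha>max * norm (z (Suc (Suc k)) - z (Suc k)) + \<beta>max * norm (z (Suc k) - z k)"
        using \<alpha>_range[of "Suc k"] \<beta>_range[of "Suc k"]
        by (intro add_mono mult_right_mono) auto
      finally show ?thesis .
    qed
  qed
  have Ldec: "decseq (\<lambda>k. L (z (Suc k)))"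
    by (rule decseq_SucI) (metis Lstep Lhat order_trans)
  have Lz1: "L (z n) \<le> L (z 1)" if "1 \<le> n" for n
  proof -
    have "L (z (Suc (n - 1))) \<le> L (z (Suc 0))" by (rule decseqD[OF Ldec]) simp
    thus ?thesis using that by simp
  qed
  have Lzh1: "L (zh n) \<le> L (z 1)" if "1 \<le> n" for n
  proof -
    have "L (zh (Suc (n - 1))) \<le> L (z (Suc (n - 1)))" by (rule Lhat)
    thus ?thesis using that Lz1[of n] by simp
  qed
  obtain B where B: "\<And>w. B \<le> norm w \<Longrightarrow> L (z 1) < L w"
  proof -
    have Lz1G: "L (z 1) = ereal (G (z 1))" using LG zD[of 0] by simp
    have "\<forall>\<^sub>F w in at_infinity. ereal (G (z 1)) < L w"
      using L_coercive unfolding coercive_def tendsto_PInfty by blast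
    then obtain B where "\<forall>w. B \<le> norm w \<longrightarrow> ereal (G (z 1)) < L w"
      unfolding eventually_at_infinity by blast
    thus ?thesis using that Lz1G by metis
  qed
  have small_norm: "norm w \<le> B" if "L w \<le> L (z 1)" for w
    using B[of w] that by force
  have bz: "bounded (range z)"
  proof -
    have "range z \<subseteq> insert (z 0) (cball 0 B)"
    proof
      fix w assume "w \<in> range z"
      then obtain n where n: "w = z n" by auto
      show "w \<in> insert (z 0) (cball 0 B)"
      proof (cases n)
        case 0 thus ?thesis using n by simp
      next
        case (Suc m)
        thus ?thesis using n small_norm[OF Lz1[of n]] by simp
      qed
    qed
    thus ?thesis by (rule bounded_subset[rotated]) simp
  qed
  have bzh: "bounded (range zh)"
  proof -
    have "range zh \<subseteq> insert (zh 0) (cball 0 B)"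
    proof
      fix w assume "w \<in> range zh"
      then obtain n where n: "w = zh n" by auto
      show "w \<in> insert (zh 0) (cball 0 B)"
      proof (cases n)
        case 0 thus ?thesis using n by simp
      next
        case (Suc m)
        thus ?thesis using n small_norm[OF Lzh1[of n]] by simp
      qed
    qed
    thus ?thesis by (rule bounded_subset[rotated]) simp
  qed
  define D1 where "D1 = range (\<lambda>k. x (Suc k))"
  define D2 where "D2 = range y \<union> range yh"
  have bD1: "bounded D1"
  proof -
    have "D1 \<subseteq> fst ` range z"
    proof
      fix w assume "w \<in> D1"
      then obtain k where "w = x (Suc k)" unfolding D1_def by auto
      hence "w = fst (z (Suc k))" unfolding z_def by simp
      thus "w \<in> fst ` range z" by blast
    qed
    thus ?thesis using bounded_fst[OF bz] by (rule bounded_subset[rotated])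
  qed
  have bD2: "bounded D2"
  proof -
    have "snd ` range z = range y" unfolding z_def by (simp add: image_image)
    moreover have "snd ` range zh = range yh" unfolding zh_def by (simp add: image_image)
    ultimately have "D2 = snd ` range z \<union> snd ` range zh" unfolding D2_def by simp
    thus ?thesis using bounded_snd[OF bz] bounded_snd[OF bzh] by simp
  qed
  have D12: "D1 \<times> D2 \<subseteq> edom Q" using domQ hx by (auto simp: D1_def)
  obtain \<xi> where \<xi>: "\<xi> > 0" "\<forall>ub\<in>D1. \<forall>v\<in>D2. \<forall>vb\<in>D2. norm (dxq ub v - dxq ub vb) \<le> \<xi> * norm (v - vb)"
    using dxq_lip[OF bD1 bD2 D12] by blast
  have Lf0: "0 \<le> Lf" using df_lip by (rule lipschitz_on_nonneg)
  have Lg0: "0 \<le> Lg" using dg_lip by (rule lipschitz_on_nonneg)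
  have \<eta>10: "0 \<le> \<eta>1" using dphi1_lip by (rule lipschitz_on_nonneg)
  have \<eta>20: "0 \<le> \<eta>2" using dphi2_lip by (rule lipschitz_on_nonneg)
  define bcst where "bcst = Lf + \<eta>1 + \<xi> + Lg + \<eta>2"
  have bcst0: "0 \<le> bcst" unfolding bcst_def using Lf0 Lg0 \<eta>10 \<eta>20 \<xi>(1) by simp
  have Lfun: "L = (\<lambda>w. Q w + ereal (f (fst w) + g (snd w)))" using Lalt by (simp add: fun_eq_iff)
  have dcont: "continuous_on UNIV (\<lambda>w. (df (fst w), dg (snd w)))"
    by (intro continuous_on_Pair continuous_on_compose2[OF df_cont] continuous_on_compose2[OF dg_cont]
        continuous_on_fst continuous_on_snd continuous_on_id) auto
  have Qb: "(\<lambda>u. Q (u, w)) = (\<lambda>u. h u + ereal (q (u, w)))" for w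
    using Q_split by (simp add: fun_eq_iff add.commute)
  have rel: "\<exists>w\<in>lim_subdiff L (z (Suc k)). norm w \<le> bcst * norm (z (Suc k) - zh k)" for k
  proof -
    define a where "a = xh k"
    define bb where "bb = yh k"
    define x1 where "x1 = x (Suc k)"
    define y1 where "y1 = y (Suc k)"
    have hx1: "h x1 \<noteq> \<infinity>" using hx x1_def by simp
    define sx where "sx u = df a \<bullet> u + bregman phi1 dphi1 u a" for u
    have sxd: "(sx has_derivative (\<lambda>d. (df a + dphi1 u - dphi1 a) \<bullet> d)) (at u)" for u
      unfolding sx_def by (rule bregman_deriv[OF phi1_grad])
    have amx: "is_arg_min (\<lambda>u. Q (u, bb) + ereal (sx u)) (\<lambda>_. True) x1"
      using step_x[of k] unfolding sx_def a_def bb_def x1_def by (simp add: add.assoc)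
    have finx: "Q (x1, bb) + ereal (sx x1) = ereal (q (x1, bb) + real_of_ereal (h x1) + sx x1)"
      using Qfin[OF hx1] by simp
    have "0 \<in> frechet_subdiff (\<lambda>u. Q (u, bb) + ereal (sx u)) x1" by (rule fermat_frechet[OF amx finx])
    hence vx: "0 - (df a + dphi1 x1 - dphi1 a) \<in> frechet_subdiff (\<lambda>u. Q (u, bb)) x1"
      by (rule frechet_remove_smooth[OF _ Qn sxd])
    have vh: "(0 - (df a + dphi1 x1 - dphi1 a)) - dxq x1 bb \<in> frechet_subdiff h x1"
      using frechet_remove_smooth[where F=h and s="\<lambda>u. q (u, bb)" and x=x1 and ds="dxq x1 bb"] vx Qb[of bb] hn q_grad by simp
    define ax where "ax = (0 - (df a + dphi1 x1 - dphi1 a)) - dxq x1 bb + dxq x1 y1"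
    have axm: "ax \<in> frechet_subdiff (\<lambda>u. Q (u, y1)) x1"
      using frechet_add_smooth[OF vh hn q_grad[where u=x1 and v=y1]] Qb[of y1] unfolding ax_def by simp
    define sy where "sy v = dg bb \<bullet> v + bregman phi2 dphi2 v bb" for v
    have syd: "(sy has_derivative (\<lambda>d. (dg bb + dphi2 v - dphi2 bb) \<bullet> d)) (at v)" for v
      unfolding sy_def by (rule bregman_deriv[OF phi2_grad])
    have amy: "is_arg_min (\<lambda>v. Q (x1, v) + ereal (sy v)) (\<lambda>_. True) y1"
      using step_y[of k] unfolding sy_def bb_def x1_def y1_def by (simp add: add.assoc)
    have finy: "Q (x1, y1) + ereal (sy y1) = ereal (q (x1, y1) + real_of_ereal (h x1) + sy y1)"
      using Qfin[OF hx1] by simp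
    have "0 \<in> frechet_subdiff (\<lambda>v. Q (x1, v) + ereal (sy v)) y1" by (rule fermat_frechet[OF amy finy])
    hence vy: "0 - (dg bb + dphi2 y1 - dphi2 bb) \<in> frechet_subdiff (\<lambda>v. Q (x1, v)) y1"
      by (rule frechet_remove_smooth[OF _ Qn syd])
    define by' where "by' = 0 - (dg bb + dphi2 y1 - dphi2 bb)"
    have "(ax, by') \<in> lim_subdiff (\<lambda>u'. Q (u', y1)) x1 \<times> lim_subdiff (\<lambda>v'. Q (x1, v')) y1"
      using frechet_imp_lim[OF axm] frechet_imp_lim[OF vy] unfolding by'_def by simp
    hence pq: "(ax, by') \<in> lim_subdiff Q (x1, y1)"
      using partial_subdiff[of x1 y1] domQ hx1 by blast
    have wm: "(ax, by') + (df x1, dg y1) \<in> lim_subdiff L (x1, y1)"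
      using lim_add_smooth[OF pq Qn pair_deriv[OF f_grad g_grad] dcont] unfolding Lfun by simp
    define nx where "nx = norm (x1 - a)"
    define ny where "ny = norm (y1 - bb)"
    define N where "N = norm (z (Suc k) - zh k)"
    have NN: "N = norm (x1 - a, y1 - bb)" unfolding N_def z_def zh_def x1_def y1_def a_def bb_def by simp
    have nxN: "nx \<le> N" unfolding NN nx_def by (rule norm_fst_le)
    have nyN: "ny \<le> N" unfolding NN ny_def by (rule norm_snd_le)
    have x1D1: "x1 \<in> D1" unfolding D1_def x1_def by simp
    have y1D2: "y1 \<in> D2" and bbD2: "bb \<in> D2" unfolding D2_def y1_def bb_def by auto
    have e1: "ax + df x1 = (df x1 - df a) + (dphi1 a - dphi1 x1) + (dxq x1 y1 - dxq x1 bb)"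
      unfolding ax_def by (simp add: algebra_simps)
    have n1: "norm (ax + df x1) \<le> Lf * nx + \<eta>1 * nx + \<xi> * ny"
    proof -
      have "norm (df x1 - df a) \<le> Lf * nx"
        unfolding nx_def by (rule lipschitz_on_normD[OF df_lip]) auto
      moreover have "norm (dphi1 a - dphi1 x1) \<le> \<eta>1 * nx"
        using lipschitz_on_normD[OF dphi1_lip, of a x1] unfolding nx_def by (simp add: norm_minus_commute)
      moreover have "norm (dxq x1 y1 - dxq x1 bb) \<le> \<xi> * ny"
        using \<xi>(2) x1D1 y1D2 bbD2 unfolding ny_def by blast
      ultimately show ?thesis unfolding e1 by (smt (verit) norm_triangle_ineq)
    qed
    have e2: "by' + dg y1 = (dg y1 - dg bb) + (dphi2 bb - dphi2 y1)"
      unfolding by'_def by (simp add: algebra_simps)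
    have n2: "norm (by' + dg y1) \<le> Lg * ny + \<eta>2 * ny"
    proof -
      have "norm (dg y1 - dg bb) \<le> Lg * ny"
        unfolding ny_def by (rule lipschitz_on_normD[OF dg_lip]) auto
      moreover have "norm (dphi2 bb - dphi2 y1) \<le> \<eta>2 * ny"
        using lipschitz_on_normD[OF dphi2_lip, of bb y1] unfolding ny_def by (simp add: norm_minus_commute)
      ultimately show ?thesis unfolding e2 by (smt (verit) norm_triangle_ineq)
    qed
    have "norm ((ax, by') + (df x1, dg y1)) \<le> norm (ax + df x1) + norm (by' + dg y1)"
      using norm_Pair_le[of "ax + df x1" "by' + dg y1"] by simp
    also have "\<dots> \<le> Lf * N + \<eta>1 * N + \<xi> * N + Lg * N + \<eta>2 * N"
    proof -
      have "Lf * nx \<le> Lf * N" "\<eta>1 * nx \<le> \<eta>1 * N" "\<xi> * ny \<le> \<xi> * N" "Lg * ny \<le> Lg * N" "\<eta>2 * ny \<le> \<eta>2 * N"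
        using nxN nyN Lf0 Lg0 \<eta>10 \<eta>20 \<xi>(1) by (auto intro: mult_left_mono)
      thus ?thesis using n1 n2 by linarith
    qed
    also have "\<dots> = bcst * N" unfolding bcst_def by (simp add: algebra_simps)
    finally have "norm ((ax, by') + (df x1, dg y1)) \<le> bcst * N" .
    moreover have "z (Suc k) = (x1, y1)" unfolding z_def x1_def y1_def by simp
    ultimately show ?thesis using wm unfolding N_def by metis
  qed
  have edomL: "u \<in> edom L \<longleftrightarrow> u \<in> edom Q" for u
    using Lalt[of u] by (cases "Q u") (auto simp: edom_def)
  have KLD: "KL_at L u" if "u \<in> edom Q" for u
    using L_KL that edomL unfolding KL_function_def by blast
  have main: "summable (\<lambda>k. norm (z (Suc k) - z k)) \<and> (\<exists>zs. z \<longlonglongrightarrow> zs \<and> 0 \<in> lim_subdiff L zs)"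
    by (rule KL_conv[OF domQ_closed LG Gc zD bz c0 bcst0 dec rel inert \<alpha>max_nn \<beta>max_nn \<alpha>\<beta>_lt KLD])
  show ?thesis using main unfolding z_def critical_point_def by simp
qed


end
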